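(* Let $K$ be a commutative field, let $q\in K$, and let $\mathcal{H}_{\mathcal{PP}}$ be the $K$-vector space with basis the set $\mathcal{PP}$ of isomorphism classes of plane posets. Define $\Delta_q:\mathcal{H}_{\mathcal{PP}}\to\mathcal{H}_{\mathcal{PP}}\otimes\mathcal{H}_{\mathcal{PP}}$ linearly by $$\Delta_q(P)=\sum_{I \text{ biideal of } P} q^{h(P\setminus I,\,I)}\,(P\setminus I)\otimes I,\qquad h(A,B)=\sharp\{(x,y)\in A\times B\mid x<_h y\},$$ for every plane poset $P$ (with the convention $q^0=1$). Then $\Delta_q$ is coassociative, i.e. $(\Delta_q\otimes \mathrm{Id})\circ\Delta_q=(\mathrm{Id}\otimes\Delta_q)\circ\Delta_q$, and for all plane posets $x,y$, writing $\Delta_q(x)=\sum x^{(1)}\otimes x^{(2)}$ and $\Delta_q(y)=\sum y^{(1)}\otimes y^{(2)}$ as sums of scalar multiples of tensors of plane posets, and $|\cdot|$ for cardinality: $$\Delta_q(xy)=\sum x^{(1)}\otimes x^{(2)}y+\sum xy^{(1)}\otimes y^{(2)}-x\otimes y,$$ $$\Delta_q(x\triangleleft y)=\sum q^{|x^{(1)}||y|}\,x^{(1)}\otimes x^{(2)}\triangleleft y+\sum q^{|x||y^{(2)}|}\,x\triangleleft y^{(1)}\otimes y^{(2)}-q^{|x||y|}\,x\otimes y.$$ Hence $(\mathcal{H}_{\mathcal{PP}},m,\Delta_q)$ is an infinitesimal Hopf algebra for every $q$, as well as $(\mathcal{H}_{\mathcal{PP}},\triangleleft,\Delta_1)$, where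 an infinitesimal Hopf algebra is an associative unital algebra with a coassociative coproduct $\Delta$ satisfying $\Delta(ab)=\Delta(a)(1\otimes b)+(a\otimes 1)\Delta(b)-a\otimes b$.
   Context: A plane poset is a finite set $P$ with two partial orders $\leq_h$ and $\leq_r$ such that for all $x\neq y$ in $P$, $x$ and $y$ are comparable for $\leq_h$ if and only if they are not comparable for $\leq_r$. Plane posets are considered up to isomorphism (bijections preserving both orders); the empty plane poset is denoted $1$. A subset of a plane poset, with the restricted orders, is again a plane poset (a plane subposet). A subset $I\subseteq P$ is a biideal of $P$ if for all $x,y\in P$, ($x\in I$ and $x\leq_h y$) implies $y\in I$, and ($x\in I$ and $x\leq_r y$) implies $y\in I$. For plane posets $P,Q$: the product $PQ$ (denoted $m$) is the plane poset on $P\sqcup Q$ in which $P,Q$ are plane subposets, no element of $P$ is $\leq_h$-comparable with an element of $Q$, and $x<_r y$ for all $x\in P$, $y\in Q$; the product $P\triangleleft Q$ is the plane poset on $P\sqcup Q$ in which $P,Q$ are plane subposets, no element of $P$ is $\leq_r$-comparable with an element of $Q$, and $x<_h y$ for all $x\in P,y\in Q$. Both products are extended bilinearly to $\mathcal{H}_{\mathcal{PP}}$; they are associative with unit $1$. *)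

theory Defs
  imports Main "HOL-Library.Poly_Mapping"
begin

text \<open>A concrete plane poset is a triple (A, H, R): a finite carrier A of naturals
  and the relations of the two partial orders (reflexive, as sets of pairs).\<close>

type_synonym ppraw = "nat set \<times> (nat \<times> nat) set \<times> (nat \<times> nat) set"

definition is_pp :: "ppraw \<Rightarrow> bool" where
  "is_pp P = (case P of (A, H, R) \<Rightarrow>
     finite A \<and> partial_order_on A H \<and> partial_order_on A R \<and>
     (\<forall>x\<in>A. \<forall>y\<in>A. x \<noteq> y \<longrightarrow>
        (((x, y) \<in> H \<or> (y, x) \<in> H) \<longleftrightarrow> \<not> ((x, y) \<in> R \<or> (y, x) \<in> R))))"

definition pp_iso :: "ppraw \<Rightarrow> ppraw \<Rightarrow> bool" where
  "pp_iso P Q = (case P of (A, H, R) \<Rightarrow> case Q of (B, H', R') \<Rightarrow>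
     (\<exists>f. bij_betw f A B \<and>
        (\<forall>x\<in>A. \<forall>y\<in>A. ((x, y) \<in> H \<longleftrightarrow> (f x, f y) \<in> H') \<and>
                       ((x, y) \<in> R \<longleftrightarrow> (f x, f y) \<in> R'))))"

type_synonym ppc = "ppraw set"

definition pp_class :: "ppraw \<Rightarrow> ppc" where
  "pp_class P = {Q. is_pp Q \<and> pp_iso P Q}"

definition PP :: "ppc set" where
  "PP = {pp_class P | P. is_pp P}"

definition pp_rep :: "ppc \<Rightarrow> ppraw" where
  "pp_rep c = (SOME P. P \<in> c)"

definition pp_card :: "ppc \<Rightarrow> nat" where
  "pp_card c = card (fst (pp_rep c))"

definition pp_restrict :: "ppraw \<Rightarrow> nat set \<Rightarrow> ppraw" where
  "pp_restrict P S = (case P of (A, H, R) \<Rightarrow> (S, H \<inter> (S \<times> S), R \<inter> (S \<times> S)))"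

definition biideal :: "ppraw \<Rightarrow> nat set \<Rightarrow> bool" where
  "biideal P I = (case P of (A, H, R) \<Rightarrow> I \<subseteq> A \<and>
     (\<forall>x y. (x \<in> I \<and> (x, y) \<in> H \<longrightarrow> y \<in> I) \<and> (x \<in> I \<and> (x, y) \<in> R \<longrightarrow> y \<in> I)))"

definition hcount :: "ppraw \<Rightarrow> nat set \<Rightarrow> nat set \<Rightarrow> nat" where
  "hcount P X Y = (case P of (A, H, R) \<Rightarrow> card {(x, y). x \<in> X \<and> y \<in> Y \<and> (x, y) \<in> H \<and> x \<noteq> y})"

section \<open>The two products (disjoint union encoded by even / odd naturals)\<close>

definition encl :: "nat \<Rightarrow> nat" where "encl a = 2 * a"
definition encr :: "nat \<Rightarrow> nat" where "encr b = 2 * b + 1"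

definition pp_m_raw :: "ppraw \<Rightarrow> ppraw \<Rightarrow> ppraw" where
  "pp_m_raw P Q = (case P of (A, H, R) \<Rightarrow> case Q of (B, H', R') \<Rightarrow>
     (encl ` A \<union> encr ` B,
      map_prod encl encl ` H \<union> map_prod encr encr ` H',
      map_prod encl encl ` R \<union> map_prod encr encr ` R' \<union> (encl ` A \<times> encr ` B)))"

definition pp_tri_raw :: "ppraw \<Rightarrow> ppraw \<Rightarrow> ppraw" where
  "pp_tri_raw P Q = (case P of (A, H, R) \<Rightarrow> case Q of (B, H', R') \<Rightarrow>
     (encl ` A \<union> encr ` B,
      map_prod encl encl ` H \<union> map_prod encr encr ` H' \<union> (encl ` A \<times> encr ` B),
      map_prod encl encl ` R \<union> map_prod encr encr ` R'))"

definition pp_m :: "ppc \<Rightarrow> ppc \<Rightarrow> ppc" where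
  "pp_m x y = pp_class (pp_m_raw (pp_rep x) (pp_rep y))"

definition pp_tri :: "ppc \<Rightarrow> ppc \<Rightarrow> ppc" where
  "pp_tri x y = pp_class (pp_tri_raw (pp_rep x) (pp_rep y))"

definition delta_raw :: "'k::field \<Rightarrow> ppraw \<Rightarrow> (ppc \<times> ppc) \<Rightarrow>\<^sub>0 'k" where
  "delta_raw q P = (\<Sum>I \<in> {I. biideal P I}.
      Poly_Mapping.single (pp_class (pp_restrict P (fst P - I)), pp_class (pp_restrict P I))
        (q ^ hcount P (fst P - I) I))"

definition delta :: "'k::field \<Rightarrow> ppc \<Rightarrow> (ppc \<times> ppc) \<Rightarrow>\<^sub>0 'k" where
  "delta q x = delta_raw q (pp_rep x)"

definition delta_lin :: "'k::field \<Rightarrow> (ppc \<Rightarrow>\<^sub>0 'k) \<Rightarrow> (ppc \<times> ppc) \<Rightarrow>\<^sub>0 'k" where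
  "delta_lin q v = (\<Sum>a \<in> Poly_Mapping.keys v. Poly_Mapping.map (\<lambda>c. Poly_Mapping.lookup v a * c) (delta q a))"

definition delta_tensor_id ::
  "(ppc \<Rightarrow> ((ppc \<times> ppc) \<Rightarrow>\<^sub>0 'k::field)) \<Rightarrow> ((ppc \<times> ppc) \<Rightarrow>\<^sub>0 'k) \<Rightarrow> ((ppc \<times> ppc) \<times> ppc) \<Rightarrow>\<^sub>0 'k" where
  "delta_tensor_id D t = (\<Sum>p \<in> Poly_Mapping.keys t. \<Sum>r \<in> Poly_Mapping.keys (D (fst p)).
      Poly_Mapping.single ((fst r, snd r), snd p) (Poly_Mapping.lookup t p * Poly_Mapping.lookup (D (fst p)) r))"

definition id_tensor_delta ::
  "(ppc \<Rightarrow> ((ppc \<times> ppc) \<Rightarrow>\<^sub>0 'k::field)) \<Rightarrow> ((ppc \<times> ppc) \<Rightarrow>\<^sub>0 'k) \<Rightarrow> ((ppc \<times> ppc) \<times> ppc) \<Rightarrow>\<^sub>0 'k" where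
  "id_tensor_delta D t = (\<Sum>p \<in> Poly_Mapping.keys t. \<Sum>r \<in> Poly_Mapping.keys (D (snd p)).
      Poly_Mapping.single ((fst p, fst r), snd r) (Poly_Mapping.lookup t p * Poly_Mapping.lookup (D (snd p)) r))"

definition tens_rmul ::
  "(ppc \<Rightarrow> ppc \<Rightarrow> 'k::field) \<Rightarrow> (ppc \<Rightarrow> ppc \<Rightarrow> ppc) \<Rightarrow> ((ppc \<times> ppc) \<Rightarrow>\<^sub>0 'k) \<Rightarrow> ppc \<Rightarrow> (ppc \<times> ppc) \<Rightarrow>\<^sub>0 'k" where
  "tens_rmul c mul t y = (\<Sum>p \<in> Poly_Mapping.keys t.
      Poly_Mapping.single (fst p, mul (snd p) y) (c (fst p) (snd p) * Poly_Mapping.lookup t p))"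

definition tens_lmul ::
  "(ppc \<Rightarrow> ppc \<Rightarrow> 'k::field) \<Rightarrow> (ppc \<Rightarrow> ppc \<Rightarrow> ppc) \<Rightarrow> ppc \<Rightarrow> ((ppc \<times> ppc) \<Rightarrow>\<^sub>0 'k) \<Rightarrow> (ppc \<times> ppc) \<Rightarrow>\<^sub>0 'k" where
  "tens_lmul c mul x t = (\<Sum>p \<in> Poly_Mapping.keys t.
      Poly_Mapping.single (mul x (fst p), snd p) (c (fst p) (snd p) * Poly_Mapping.lookup t p))"

end

theory Submission
  imports Defs
begin


lemma pm_additive_sum:
  fixes F :: "'a \<Rightarrow> 'b::comm_monoid_add \<Rightarrow> 'c::ab_group_add"
  assumes add: "\<And>a b. F p (a + b) = F p a + F p b" and fin: "finite T"
  shows "F p (\<Sum>i\<in>T. g i) = (\<Sum>i\<in>T. F p (g i))"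
proof -
  have z: "F p 0 = 0" using add[of 0 0] by simp
  show ?thesis using fin by (induction T rule: finite_induct) (simp_all add: z add)
qed

lemma pm_lin:
  fixes F :: "'a \<Rightarrow> 'b::comm_monoid_add \<Rightarrow> 'c::ab_group_add"
  assumes add: "\<And>p a b. F p (a + b) = F p a + F p b" and fin: "finite S"
  shows "(\<Sum>p\<in>Poly_Mapping.keys (\<Sum>i\<in>S. Poly_Mapping.single (k i) (w i)).
            F p (Poly_Mapping.lookup (\<Sum>i\<in>S. Poly_Mapping.single (k i) (w i)) p))
         = (\<Sum>i\<in>S. F (k i) (w i))"
proof -
  let ?t = "\<Sum>i\<in>S. Poly_Mapping.single (k i) (w i)"
  have z: "\<And>p. F p 0 = 0" using add[of _ 0 0] by simp
  have lk: "Poly_Mapping.lookup ?t p = (\<Sum>i\<in>{i\<in>S. k i = p}. w i)" for p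
    by (simp add: lookup_sum lookup_single when_def sum.inter_filter[OF fin, symmetric] eq_commute)
  have sub: "Poly_Mapping.keys ?t \<subseteq> k ` S"
  proof
    fix p assume "p \<in> Poly_Mapping.keys ?t"
    hence "Poly_Mapping.lookup ?t p \<noteq> 0" by (simp add: in_keys_iff)
    hence "{i\<in>S. k i = p} \<noteq> {}" using lk[of p] by (metis sum.empty)
    thus "p \<in> k ` S" by blast
  qed
  have "(\<Sum>p\<in>Poly_Mapping.keys ?t. F p (Poly_Mapping.lookup ?t p))
      = (\<Sum>p\<in>k ` S. F p (Poly_Mapping.lookup ?t p))"
    by (rule sum.mono_neutral_left) (use fin sub in \<open>auto simp: in_keys_iff z\<close>)
  also have "\<dots> = (\<Sum>p\<in>k ` S. \<Sum>i\<in>{i\<in>S. k i = p}. F p (w i))"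
    unfolding lk by (intro sum.cong refl pm_additive_sum[OF add]) (use fin in auto)
  also have "\<dots> = (\<Sum>p\<in>k ` S. \<Sum>i\<in>{i\<in>S. k i = p}. F (k i) (w i))"
    by (intro sum.cong) auto
  also have "\<dots> = (\<Sum>i\<in>S. F (k i) (w i))"
    by (rule sum.image_gen[OF fin, symmetric])
  finally show ?thesis .
qed

lemma pm_expand: "t = (\<Sum>p\<in>Poly_Mapping.keys t. Poly_Mapping.single p (Poly_Mapping.lookup t p))"
  by (rule poly_mapping_eqI)
     (simp add: lookup_sum lookup_single when_def in_keys_iff sum.delta' split: if_splits)

section \<open>Isomorphisms\<close>

definition iso_by :: "(nat \<Rightarrow> nat) \<Rightarrow> ppraw \<Rightarrow> ppraw \<Rightarrow> bool" where
  "iso_by f P Q = (bij_betw f (fst P) (fst Q) \<and>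
     (\<forall>x\<in>fst P. \<forall>y\<in>fst P. ((x, y) \<in> fst (snd P) \<longleftrightarrow> (f x, f y) \<in> fst (snd Q)) \<and>
                       ((x, y) \<in> snd (snd P) \<longleftrightarrow> (f x, f y) \<in> snd (snd Q))))"

lemma pp_iso_iff: "pp_iso P Q = (\<exists>f. iso_by f P Q)"
  by (cases P; cases Q) (simp add: pp_iso_def iso_by_def)

lemma iso_by_id: "iso_by id P P"
  by (simp add: iso_by_def)

lemma pp_iso_refl: "pp_iso P P"
  using iso_by_id pp_iso_iff by blast

lemma iso_by_inv: "iso_by f P Q \<Longrightarrow> iso_by (inv_into (fst P) f) Q P"
  unfolding iso_by_def
  by (auto simp: bij_betw_inv_into bij_betw_inv_into_right bij_betw_imp_surj_on inv_into_into
           dest: bij_betw_inv_into_right)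

lemma iso_by_comp: "iso_by f P Q \<Longrightarrow> iso_by g Q Z \<Longrightarrow> iso_by (g \<circ> f) P Z"
  unfolding iso_by_def
  by (auto intro: bij_betw_trans dest: bij_betwE)

lemma pp_iso_sym: "pp_iso P Q \<Longrightarrow> pp_iso Q P"
  using iso_by_inv pp_iso_iff by blast

lemma pp_iso_trans: "pp_iso P Q \<Longrightarrow> pp_iso Q Z \<Longrightarrow> pp_iso P Z"
  unfolding pp_iso_iff using iso_by_comp by blast

lemma pp_class_eq: "pp_iso P Q \<Longrightarrow> pp_class P = pp_class Q"
  unfolding pp_class_def using pp_iso_sym pp_iso_trans by blast

lemma rep_in_class: "is_pp P \<Longrightarrow> pp_rep (pp_class P) \<in> pp_class P"
  unfolding pp_rep_def by (rule someI[of _ P]) (simp add: pp_class_def pp_iso_refl)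

lemma rep_class: assumes "is_pp P"
  shows "is_pp (pp_rep (pp_class P))" "pp_iso P (pp_rep (pp_class P))"
  using rep_in_class[OF assms] unfolding pp_class_def by auto

lemma PP_rep: assumes "x \<in> PP" shows "is_pp (pp_rep x)" "pp_class (pp_rep x) = x"
proof -
  obtain P where x: "x = pp_class P" "is_pp P" using assms unfolding PP_def by auto
  show "is_pp (pp_rep x)" using rep_class x by simp
  show "pp_class (pp_rep x) = x" using rep_class(2)[OF x(2)] x pp_class_eq pp_iso_sym by metis
qed

lemma class_in_PP: "is_pp P \<Longrightarrow> pp_class P \<in> PP"
  unfolding PP_def by (cases P) blast

lemma iso_card: "iso_by f P Q \<Longrightarrow> card (fst P) = card (fst Q)"
  unfolding iso_by_def using bij_betw_same_card by blast

lemma pp_card_class: assumes "is_pp P" shows "pp_card (pp_class P) = card (fst P)"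
  using rep_class(2)[OF assms] iso_card unfolding pp_card_def pp_iso_iff by metis

lemma is_pp_restrict: assumes "is_pp P" "S \<subseteq> fst P" shows "is_pp (pp_restrict P S)"
proof -
  obtain A H R where P: "P = (A, H, R)" by (cases P)
  show ?thesis using assms unfolding P is_pp_def pp_restrict_def
    by (simp add: partial_order_on_def preorder_on_def refl_on_def trans_def antisym_def)
       (intro conjI; (elim conjE)?; (rule finite_subset, assumption)?; blast)
qed

lemma fst_restrict[simp]: "fst (pp_restrict P S) = S"
  by (cases P) (simp add: pp_restrict_def)

lemma restrict_restrict: "T \<subseteq> S \<Longrightarrow> pp_restrict (pp_restrict P S) T = pp_restrict P T"
  by (cases P) (auto simp: pp_restrict_def)

lemma iso_by_restrict: assumes "iso_by f P Q" "S \<subseteq> fst P"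
  shows "iso_by f (pp_restrict P S) (pp_restrict Q (f ` S))"
proof -
  obtain A H R where P: "P = (A, H, R)" by (cases P)
  obtain B H' R' where Q: "Q = (B, H', R')" by (cases Q)
  have inj: "inj_on f S" using assms bij_betw_imp_inj_on inj_on_subset unfolding iso_by_def by blast
  show ?thesis using assms inj unfolding P Q iso_by_def pp_restrict_def
    by (auto simp: inj_on_imp_bij_betw subset_iff)
qed

lemma hcount_iso: assumes "iso_by f P Q" "X \<subseteq> fst P" "Y \<subseteq> fst P"
  shows "hcount Q (f ` X) (f ` Y) = hcount P X Y"
proof -
  obtain A H R where P: "P = (A, H, R)" by (cases P)
  obtain B H' R' where Q: "Q = (B, H', R')" by (cases Q)
  have inj: "inj_on f A" using assms bij_betw_imp_inj_on unfolding iso_by_def P by auto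
  let ?S = "{(x, y). x \<in> X \<and> y \<in> Y \<and> (x, y) \<in> H \<and> x \<noteq> y}"
  have inj2: "inj_on (map_prod f f) ?S"
    using inj assms(2,3) unfolding P by (auto simp: inj_on_def)
  have "{(x, y). x \<in> f ` X \<and> y \<in> f ` Y \<and> (x, y) \<in> H' \<and> x \<noteq> y} = map_prod f f ` ?S"
  proof (rule set_eqI, rule iffI)
    fix z assume "z \<in> {(x, y). x \<in> f ` X \<and> y \<in> f ` Y \<and> (x, y) \<in> H' \<and> x \<noteq> y}"
    then obtain x y where z: "z = (f x, f y)" "x \<in> X" "y \<in> Y" "(f x, f y) \<in> H'" "f x \<noteq> f y" by auto
    hence "(x, y) \<in> H" "x \<noteq> y" using assms unfolding P Q iso_by_def by auto
    thus "z \<in> map_prod f f ` ?S" using z by force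
  next
    fix z assume "z \<in> map_prod f f ` ?S"
    then obtain x y where z: "z = (f x, f y)" "x \<in> X" "y \<in> Y" "(x, y) \<in> H" "x \<noteq> y" by auto
    have xy: "x \<in> A" "y \<in> A" using z(2,3) assms(2,3) unfolding P by auto
    hence "(f x, f y) \<in> H'" "f x \<noteq> f y" using z assms(1) inj xy unfolding P Q iso_by_def inj_on_def by auto
    thus "z \<in> {(x, y). x \<in> f ` X \<and> y \<in> f ` Y \<and> (x, y) \<in> H' \<and> x \<noteq> y}" using z by auto
  qed
  thus ?thesis unfolding P Q hcount_def using card_image[OF inj2] by simp
qed



lemma biideal_iso: assumes "iso_by f P Q" "is_pp P" "is_pp Q"
  shows "{J. biideal Q J} = (`) f ` {I. biideal P I}"
proof -
  obtain A H R where P: "P = (A, H, R)" by (cases P)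
  obtain B H' R' where Q: "Q = (B, H', R')" by (cases Q)
  have bij: "bij_betw f A B" using assms(1) unfolding iso_by_def P Q by simp
  have HA: "H \<subseteq> A \<times> A" "R \<subseteq> A \<times> A" "H' \<subseteq> B \<times> B" "R' \<subseteq> B \<times> B"
    using assms(2,3) unfolding P Q is_pp_def partial_order_on_def preorder_on_def by auto
  have ordH: "\<And>x y. x \<in> A \<Longrightarrow> y \<in> A \<Longrightarrow> ((x, y) \<in> H \<longleftrightarrow> (f x, f y) \<in> H')"
   and ordR: "\<And>x y. x \<in> A \<Longrightarrow> y \<in> A \<Longrightarrow> ((x, y) \<in> R \<longleftrightarrow> (f x, f y) \<in> R')"
    using assms(1) unfolding iso_by_def P Q by simp_all
  have fA: "f ` A = B" using bij bij_betw_imp_surj_on by blast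
  have bQ: "biideal Q J \<longleftrightarrow> J \<subseteq> B \<and> (\<forall>x y. x \<in> J \<and> (x, y) \<in> H' \<longrightarrow> y \<in> J) \<and> (\<forall>x y. x \<in> J \<and> (x, y) \<in> R' \<longrightarrow> y \<in> J)" for J
    unfolding Q biideal_def prod.case by blast
  have bP: "biideal P I \<longleftrightarrow> I \<subseteq> A \<and> (\<forall>x y. x \<in> I \<and> (x, y) \<in> H \<longrightarrow> y \<in> I) \<and> (\<forall>x y. x \<in> I \<and> (x, y) \<in> R \<longrightarrow> y \<in> I)" for I
    unfolding P biideal_def prod.case by blast
  show ?thesis
  proof (rule set_eqI, rule iffI)
    fix J assume "J \<in> {J. biideal Q J}"
    hence J: "J \<subseteq> B" "\<And>x y. x \<in> J \<Longrightarrow> (x, y) \<in> H' \<Longrightarrow> y \<in> J" "\<And>x y. x \<in> J \<Longrightarrow> (x, y) \<in> R' \<Longrightarrow> y \<in> J"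
      using bQ by blast+
    define I where "I = {x \<in> A. f x \<in> J}"
    have fI: "f ` I = J" using J(1) fA unfolding I_def by auto
    have "biideal P I"
      unfolding bP
    proof (intro conjI allI impI)
      show "I \<subseteq> A" unfolding I_def by auto
    next
      fix x y assume a: "x \<in> I \<and> (x, y) \<in> H"
      hence xy: "y \<in> A" "x \<in> A" using HA by auto
      hence "(f x, f y) \<in> H'" using a ordH by blast
      hence "f y \<in> J" using J(2) a unfolding I_def by blast
      thus "y \<in> I" using xy unfolding I_def by blast
    next
      fix x y assume a: "x \<in> I \<and> (x, y) \<in> R"
      hence xy: "y \<in> A" "x \<in> A" using HA by auto
      hence "(f x, f y) \<in> R'" using a ordR by blast
      hence "f y \<in> J" using J(3) a unfolding I_def by blast
      thus "y \<in> I" using xy unfolding I_def by blast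
    qed
    thus "J \<in> (`) f ` {I. biideal P I}" using fI by blast
  next
    fix J assume "J \<in> (`) f ` {I. biideal P I}"
    then obtain I where I: "biideal P I" "J = f ` I" by auto
    have IA: "I \<subseteq> A" and I2: "\<And>x y. x \<in> I \<Longrightarrow> (x, y) \<in> H \<Longrightarrow> y \<in> I"
      and I3: "\<And>x y. x \<in> I \<Longrightarrow> (x, y) \<in> R \<Longrightarrow> y \<in> I" using I(1) bP by blast+
    show "J \<in> {J. biideal Q J}"
      unfolding mem_Collect_eq bQ
    proof (intro conjI allI impI)
      show "J \<subseteq> B" using IA fA I by auto
    next
      fix u v assume a: "u \<in> J \<and> (u, v) \<in> H'"
      then obtain x where x: "x \<in> I" "u = f x" using I by auto
      have "v \<in> B" using a HA by auto
      then obtain y where y: "y \<in> A" "v = f y" using fA by auto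
      have "(x, y) \<in> H" using ordH[of x y] x y a IA by auto
      hence "y \<in> I" using I2 x by blast
      thus "v \<in> J" using y I by auto
    next
      fix u v assume a: "u \<in> J \<and> (u, v) \<in> R'"
      then obtain x where x: "x \<in> I" "u = f x" using I by auto
      have "v \<in> B" using a HA by auto
      then obtain y where y: "y \<in> A" "v = f y" using fA by auto
      have "(x, y) \<in> R" using ordR[of x y] x y a IA by auto
      hence "y \<in> I" using I3 x by blast
      thus "v \<in> J" using y I by auto
    qed
  qed
qed

lemma biideal_sub: "biideal P I \<Longrightarrow> I \<subseteq> fst P"
  by (cases P) (simp add: biideal_def)

lemma finite_biideals: "is_pp P \<Longrightarrow> finite {I. biideal P I}"
proof (rule finite_subset[of _ "Pow (fst P)"])
  show "{I. biideal P I} \<subseteq> Pow (fst P)" using biideal_sub by blast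
  assume "is_pp P" thus "finite (Pow (fst P))" by (cases P) (simp add: is_pp_def)
qed

lemma delta_raw_iso: assumes "is_pp P" "is_pp Q" "pp_iso P Q"
  shows "delta_raw q Q = delta_raw q P"
proof -
  obtain f where f: "iso_by f P Q" using assms(3) pp_iso_iff by blast
  have inj: "inj_on f (fst P)" and fA: "f ` fst P = fst Q"
    using f unfolding iso_by_def by (auto simp: bij_betw_def)
  have inj2: "inj_on ((`) f) {I. biideal P I}"
    by (rule inj_on_image, rule inj_on_subset[OF inj]) (auto dest: biideal_sub)
  have "delta_raw q Q = (\<Sum>J \<in> (`) f ` {I. biideal P I}.
      Poly_Mapping.single (pp_class (pp_restrict Q (fst Q - J)), pp_class (pp_restrict Q J))
        (q ^ hcount Q (fst Q - J) J))"
    unfolding delta_raw_def biideal_iso[OF f assms(1,2)] ..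
  also have "\<dots> = (\<Sum>I \<in> {I. biideal P I}.
      Poly_Mapping.single (pp_class (pp_restrict Q (fst Q - f ` I)), pp_class (pp_restrict Q (f ` I)))
        (q ^ hcount Q (fst Q - f ` I) (f ` I)))"
    by (rule sum.reindex[OF inj2, unfolded comp_def])
  also have "\<dots> = delta_raw q P"
    unfolding delta_raw_def
  proof (rule sum.cong[OF refl])
    fix I assume "I \<in> {I. biideal P I}"
    hence IA: "I \<subseteq> fst P" by (auto dest: biideal_sub)
    have d: "fst Q - f ` I = f ` (fst P - I)" using inj IA fA by (simp add: inj_on_image_set_diff)
    have c1: "pp_class (pp_restrict Q (f ` (fst P - I))) = pp_class (pp_restrict P (fst P - I))"
      using iso_by_restrict[OF f, of "fst P - I"] pp_class_eq pp_iso_iff pp_iso_sym by blast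
    have c2: "pp_class (pp_restrict Q (f ` I)) = pp_class (pp_restrict P I)"
      using iso_by_restrict[OF f IA] pp_class_eq pp_iso_iff pp_iso_sym by blast
    have h: "hcount Q (f ` (fst P - I)) (f ` I) = hcount P (fst P - I) I"
      using hcount_iso[OF f _ IA] by blast
    show "Poly_Mapping.single (pp_class (pp_restrict Q (fst Q - f ` I)), pp_class (pp_restrict Q (f ` I)))
        (q ^ hcount Q (fst Q - f ` I) (f ` I)) =
      Poly_Mapping.single (pp_class (pp_restrict P (fst P - I)), pp_class (pp_restrict P I))
        (q ^ hcount P (fst P - I) I)"
      unfolding d c1 c2 h ..
  qed
  finally show ?thesis .
qed

lemma delta_class: assumes "is_pp P" shows "delta q (pp_class P) = delta_raw q P"
  unfolding delta_def using delta_raw_iso[OF assms rep_class(1)[OF assms] rep_class(2)[OF assms]] .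

lemma single_sum_distrib:
  "(\<Sum>r\<in>T. Poly_Mapping.single (g r) (c r * (a + b))) =
   (\<Sum>r\<in>T. Poly_Mapping.single (g r) (c r * a)) + (\<Sum>r\<in>T. Poly_Mapping.single (g r) (c r * (b::'k::field)))"
  by (simp add: distrib_left single_add sum.distrib)

lemma dti_sum: assumes "finite S"
  shows "delta_tensor_id D (\<Sum>i\<in>S. Poly_Mapping.single (k i) (w i)) =
    (\<Sum>i\<in>S. \<Sum>r \<in> Poly_Mapping.keys (D (fst (k i))).
      Poly_Mapping.single ((fst r, snd r), snd (k i)) (w i * Poly_Mapping.lookup (D (fst (k i))) r))"
  unfolding delta_tensor_id_def
  by (rule pm_lin[OF _ assms, where F = "\<lambda>p c. \<Sum>r \<in> Poly_Mapping.keys (D (fst p)).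
      Poly_Mapping.single ((fst r, snd r), snd p) (c * Poly_Mapping.lookup (D (fst p)) r)"])
     (simp add: distrib_right single_add sum.distrib)

lemma itd_sum: assumes "finite S"
  shows "id_tensor_delta D (\<Sum>i\<in>S. Poly_Mapping.single (k i) (w i)) =
    (\<Sum>i\<in>S. \<Sum>r \<in> Poly_Mapping.keys (D (snd (k i))).
      Poly_Mapping.single ((fst (k i), fst r), snd r) (w i * Poly_Mapping.lookup (D (snd (k i))) r))"
  unfolding id_tensor_delta_def
  by (rule pm_lin[OF _ assms, where F = "\<lambda>p c. \<Sum>r \<in> Poly_Mapping.keys (D (snd p)).
      Poly_Mapping.single ((fst p, fst r), snd r) (c * Poly_Mapping.lookup (D (snd p)) r)"])
     (simp add: distrib_right single_add sum.distrib)

lemma push_sum: assumes "finite T"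
  shows "(\<Sum>r \<in> Poly_Mapping.keys (\<Sum>j\<in>T. Poly_Mapping.single (k j) (v j)).
      Poly_Mapping.single (g r) (c * Poly_Mapping.lookup (\<Sum>j\<in>T. Poly_Mapping.single (k j) (v j)) r))
    = (\<Sum>j\<in>T. Poly_Mapping.single (g (k j)) (c * (v j :: 'k::field)))"
  by (rule pm_lin[OF _ assms, where F = "\<lambda>r x. Poly_Mapping.single (g r) (c * x)"])
     (simp add: distrib_left single_add)

lemma map_expand: assumes "f 0 = 0"
  shows "Poly_Mapping.map f m = (\<Sum>p\<in>Poly_Mapping.keys m. Poly_Mapping.single p (f (Poly_Mapping.lookup m p)))"
  by (rule poly_mapping_eqI)
     (simp add: map.rep_eq assms lookup_sum lookup_single when_def in_keys_iff sum.delta' split: if_splits)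

lemma map_scale_sum: assumes "finite S"
  shows "Poly_Mapping.map (\<lambda>c. s * c) (\<Sum>i\<in>S. Poly_Mapping.single (k i) (w i)) =
         (\<Sum>i\<in>S. Poly_Mapping.single (k i) (s * (w i :: 'k::field)))"
  unfolding map_expand[where f = "\<lambda>c. s * c", OF mult_zero_right]
  by (rule pm_lin[OF _ assms, where F = "\<lambda>p c. Poly_Mapping.single p (s * c)"])
     (simp add: distrib_left single_add)

lemma hcount_alt: "hcount (A, H, R) X Y = card {(x, y). x \<in> X \<and> y \<in> Y \<and> (x, y) \<in> H \<and> x \<noteq> y}"
  by (simp add: hcount_def)

lemma hcount_restrict: assumes "X \<subseteq> S" "Y \<subseteq> S"
  shows "hcount (pp_restrict P S) X Y = hcount P X Y"
proof -
  obtain A H R where P: "P = (A, H, R)" by (cases P)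
  show ?thesis unfolding P pp_restrict_def using assms
    by (simp add: hcount_def) (intro arg_cong[where f = card]; blast)
qed

lemma hcount_union1: assumes "X1 \<inter> X2 = {}" "finite X1" "finite X2" "finite Y"
  shows "hcount P (X1 \<union> X2) Y = hcount P X1 Y + hcount P X2 Y"
proof -
  obtain A H R where P: "P = (A, H, R)" by (cases P)
  let ?S = "\<lambda>X. {(x, y). x \<in> X \<and> y \<in> Y \<and> (x, y) \<in> H \<and> x \<noteq> y}"
  have f: "finite (?S X)" if "finite X" for X
    by (rule finite_subset[of _ "X \<times> Y"]) (use that assms(4) in auto)
  have "?S (X1 \<union> X2) = ?S X1 \<union> ?S X2" by blast
  moreover have "?S X1 \<inter> ?S X2 = {}" using assms(1) by blast
  ultimately show ?thesis unfolding P hcount_alt using card_Un_disjoint[OF f f] assms(2,3) by simp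
qed

lemma hcount_union2: assumes "Y1 \<inter> Y2 = {}" "finite Y1" "finite Y2" "finite X"
  shows "hcount P X (Y1 \<union> Y2) = hcount P X Y1 + hcount P X Y2"
proof -
  obtain A H R where P: "P = (A, H, R)" by (cases P)
  let ?S = "\<lambda>Y. {(x, y). x \<in> X \<and> y \<in> Y \<and> (x, y) \<in> H \<and> x \<noteq> y}"
  have f: "finite (?S Y)" if "finite Y" for Y
    by (rule finite_subset[of _ "X \<times> Y"]) (use that assms(4) in auto)
  have "?S (Y1 \<union> Y2) = ?S Y1 \<union> ?S Y2" by blast
  moreover have "?S Y1 \<inter> ?S Y2 = {}" using assms(1) by blast
  ultimately show ?thesis unfolding P hcount_alt using card_Un_disjoint[OF f f] assms(2,3) by simp
qed

lemma bi_P: "biideal (A, H, R) I \<longleftrightarrow> I \<subseteq> A \<and> (\<forall>x y. x \<in> I \<and> (x, y) \<in> H \<longrightarrow> y \<in> I) \<and> (\<forall>x y. x \<in> I \<and> (x, y) \<in> R \<longrightarrow> y \<in> I)"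
  unfolding biideal_def prod.case by blast

lemma bi_restr: "biideal (pp_restrict (A, H, R) S) J \<longleftrightarrow> J \<subseteq> S \<and> (\<forall>x y. x \<in> J \<and> (x, y) \<in> H \<and> y \<in> S \<longrightarrow> y \<in> J) \<and> (\<forall>x y. x \<in> J \<and> (x, y) \<in> R \<and> y \<in> S \<longrightarrow> y \<in> J)"
  unfolding biideal_def pp_restrict_def prod.case by blast

section \<open>Coassociativity core\<close>

lemma coassoc_core:
  fixes q s :: "'k::field"
  assumes pp: "is_pp (A, H, R)"
  defines "P \<equiv> (A, H, R)"
  shows "(\<Sum>I\<in>{I. biideal P I}. \<Sum>J\<in>{J. biideal (pp_restrict P (A - I)) J}.
      Poly_Mapping.single ((pp_class (pp_restrict P (A - I - J)), pp_class (pp_restrict P J)), pp_class (pp_restrict P I))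
        (s * (q ^ hcount P (A - I) I * q ^ hcount P (A - I - J) J)))
   = (\<Sum>K\<in>{K. biideal P K}. \<Sum>L\<in>{L. biideal (pp_restrict P K) L}.
      Poly_Mapping.single ((pp_class (pp_restrict P (A - K)), pp_class (pp_restrict P (K - L))), pp_class (pp_restrict P L))
        (s * (q ^ hcount P (A - K) K * q ^ hcount P (K - L) L)))"
proof -
  have finA: "finite A" using pp unfolding is_pp_def by simp
  have ppP: "is_pp P" using pp P_def by simp
  have fin1: "finite {I. biideal P I}" by (rule finite_biideals[OF ppP])
  have fin2: "finite {J. biideal (pp_restrict P S) J}" if "S \<subseteq> A" for S
    by (rule finite_biideals, rule is_pp_restrict[OF ppP]) (use that P_def in simp)
  have subI: "I \<subseteq> A" if "biideal P I" for I using that unfolding P_def bi_P by blast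
  let ?S1 = "Sigma {I. biideal P I} (\<lambda>I. {J. biideal (pp_restrict P (A - I)) J})"
  let ?S2 = "Sigma {K. biideal P K} (\<lambda>K. {L. biideal (pp_restrict P K) L})"
  let ?g = "\<lambda>(I, J). Poly_Mapping.single ((pp_class (pp_restrict P (A - I - J)), pp_class (pp_restrict P J)), pp_class (pp_restrict P I))
        (s * (q ^ hcount P (A - I) I * q ^ hcount P (A - I - J) J))"
  let ?h = "\<lambda>(K, L). Poly_Mapping.single ((pp_class (pp_restrict P (A - K)), pp_class (pp_restrict P (K - L))), pp_class (pp_restrict P L))
        (s * (q ^ hcount P (A - K) K * q ^ hcount P (K - L) L))"
  have L: "(\<Sum>I\<in>{I. biideal P I}. \<Sum>J\<in>{J. biideal (pp_restrict P (A - I)) J}. ?g (I, J)) = sum ?g ?S1"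
    unfolding prod.case by (rule sum.Sigma[OF fin1]) (auto intro: fin2)
  have R: "(\<Sum>K\<in>{K. biideal P K}. \<Sum>L\<in>{L. biideal (pp_restrict P K) L}. ?h (K, L)) = sum ?h ?S2"
    unfolding prod.case by (rule sum.Sigma[OF fin1]) (use fin2 subI in blast)
  have "sum ?g ?S1 = sum ?h ?S2"
  proof (rule sum.reindex_bij_witness[where j = "\<lambda>(I, J). (I \<union> J, I)" and i = "\<lambda>(K, L). (L, K - L)"])
    fix a assume "a \<in> ?S1"
    then obtain I J where a: "a = (I, J)" "biideal P I" "biideal (pp_restrict P (A - I)) J" by auto
    have I: "I \<subseteq> A" "\<forall>x y. x \<in> I \<and> (x, y) \<in> H \<longrightarrow> y \<in> I" "\<forall>x y. x \<in> I \<and> (x, y) \<in> R \<longrightarrow> y \<in> I"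
      using a(2) unfolding P_def bi_P by blast+
    have J: "J \<subseteq> A - I" "\<forall>x y. x \<in> J \<and> (x, y) \<in> H \<and> y \<in> A - I \<longrightarrow> y \<in> J" "\<forall>x y. x \<in> J \<and> (x, y) \<in> R \<and> y \<in> A - I \<longrightarrow> y \<in> J"
      using a(3) unfolding P_def bi_restr by blast+
    have HA: "H \<subseteq> A \<times> A" "R \<subseteq> A \<times> A" using pp unfolding is_pp_def partial_order_on_def preorder_on_def by auto
    show "(case case a of (I, J) \<Rightarrow> (I \<union> J, I) of (K, L) \<Rightarrow> (L, K - L)) = a"
      using a J(1) by auto
    have "biideal P (I \<union> J)" unfolding P_def bi_P using I J HA by blast
    moreover have "biideal (pp_restrict P (I \<union> J)) I" unfolding P_def bi_restr using I by blast
    ultimately show "(case a of (I, J) \<Rightarrow> (I \<union> J, I)) \<in> ?S2" using a by simp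
    have e1: "A - (I \<union> J) = A - I - J" "I \<union> J - I = J" using J(1) by auto
    have fI: "finite I" "finite J" "finite (A - I - J)"
      using finA I(1) J(1) by (auto intro: finite_subset[of _ A])
    have d: "A - I = (A - I - J) \<union> J" using J(1) by auto
    have h1: "hcount P (A - I) I = hcount P (A - I - J) I + hcount P J I"
      by (subst d, rule hcount_union1) (use fI in auto)
    have h2: "hcount P (A - I - J) (I \<union> J) = hcount P (A - I - J) I + hcount P (A - I - J) J"
      by (rule hcount_union2) (use fI J(1) in auto)
    show "?h ((\<lambda>(I, J). (I \<union> J, I)) a) = ?g a"
      unfolding a prod.case e1 h1 h2 by (simp add: power_add ac_simps)
  next
    fix b assume "b \<in> ?S2"
    then obtain K L where b: "b = (K, L)" "biideal P K" "biideal (pp_restrict P K) L" by auto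
    have K: "K \<subseteq> A" "\<forall>x y. x \<in> K \<and> (x, y) \<in> H \<longrightarrow> y \<in> K" "\<forall>x y. x \<in> K \<and> (x, y) \<in> R \<longrightarrow> y \<in> K"
      using b(2) unfolding P_def bi_P by blast+
    have L: "L \<subseteq> K" "\<forall>x y. x \<in> L \<and> (x, y) \<in> H \<and> y \<in> K \<longrightarrow> y \<in> L" "\<forall>x y. x \<in> L \<and> (x, y) \<in> R \<and> y \<in> K \<longrightarrow> y \<in> L"
      using b(3) unfolding P_def bi_restr by blast+
    show "(case case b of (K, L) \<Rightarrow> (L, K - L) of (I, J) \<Rightarrow> (I \<union> J, I)) = b"
      using b L(1) by auto
    have "biideal P L" unfolding P_def bi_P using K L by blast
    moreover have "biideal (pp_restrict P (A - L)) (K - L)" unfolding P_def bi_restr using K L by blast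
    ultimately show "(case b of (K, L) \<Rightarrow> (L, K - L)) \<in> ?S1" using b by simp
  qed
  thus ?thesis using L R by simp
qed

lemma delta_raw_restrict_expand:
  assumes "is_pp P" "S \<subseteq> fst P"
  shows "delta q (pp_class (pp_restrict P S)) = (\<Sum>J\<in>{J. biideal (pp_restrict P S) J}.
      Poly_Mapping.single (pp_class (pp_restrict P (S - J)), pp_class (pp_restrict P J)) (q ^ hcount P (S - J) J))"
proof -
  have pp: "is_pp (pp_restrict P S)" by (rule is_pp_restrict[OF assms])
  show ?thesis unfolding delta_class[OF pp] delta_raw_def fst_restrict
  proof (rule sum.cong[OF refl])
    fix J assume "J \<in> {J. biideal (pp_restrict P S) J}"
    hence JS: "J \<subseteq> S" using biideal_sub by fastforce
    show "Poly_Mapping.single (pp_class (pp_restrict (pp_restrict P S) (S - J)), pp_class (pp_restrict (pp_restrict P S) J))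
          (q ^ hcount (pp_restrict P S) (S - J) J) =
        Poly_Mapping.single (pp_class (pp_restrict P (S - J)), pp_class (pp_restrict P J)) (q ^ hcount P (S - J) J)"
      using JS by (simp add: restrict_restrict hcount_restrict Diff_subset)
  qed
qed

lemma coassoc_one:
  fixes q s :: "'k::field"
  assumes pp: "is_pp P"
  shows "(\<Sum>I\<in>{I. biideal P I}. \<Sum>r\<in>Poly_Mapping.keys (delta q (pp_class (pp_restrict P (fst P - I)))).
      Poly_Mapping.single ((fst r, snd r), pp_class (pp_restrict P I))
        (s * q ^ hcount P (fst P - I) I * Poly_Mapping.lookup (delta q (pp_class (pp_restrict P (fst P - I)))) r))
   = (\<Sum>I\<in>{I. biideal P I}. \<Sum>r\<in>Poly_Mapping.keys (delta q (pp_class (pp_restrict P I))).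
      Poly_Mapping.single ((pp_class (pp_restrict P (fst P - I)), fst r), snd r)
        (s * q ^ hcount P (fst P - I) I * Poly_Mapping.lookup (delta q (pp_class (pp_restrict P I))) r))"
proof -
  obtain A H R where P: "P = (A, H, R)" by (cases P)
  have fin2: "finite {J. biideal (pp_restrict P S) J}" if "S \<subseteq> A" for S
    by (rule finite_biideals, rule is_pp_restrict[OF pp]) (use that P in simp)
  have subI: "I \<subseteq> A" if "biideal P I" for I using that biideal_sub P by fastforce
  have "(\<Sum>I\<in>{I. biideal P I}. \<Sum>r\<in>Poly_Mapping.keys (delta q (pp_class (pp_restrict P (fst P - I)))).
      Poly_Mapping.single ((fst r, snd r), pp_class (pp_restrict P I))
        (s * q ^ hcount P (fst P - I) I * Poly_Mapping.lookup (delta q (pp_class (pp_restrict P (fst P - I)))) r))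
    = (\<Sum>I\<in>{I. biideal P I}. \<Sum>J\<in>{J. biideal (pp_restrict P (A - I)) J}.
      Poly_Mapping.single ((pp_class (pp_restrict P (A - I - J)), pp_class (pp_restrict P J)), pp_class (pp_restrict P I))
        (s * (q ^ hcount P (A - I) I * q ^ hcount P (A - I - J) J)))"
  proof (rule sum.cong[OF refl])
    fix I assume "I \<in> {I. biideal P I}"
    show "(\<Sum>r\<in>Poly_Mapping.keys (delta q (pp_class (pp_restrict P (fst P - I)))).
      Poly_Mapping.single ((fst r, snd r), pp_class (pp_restrict P I))
        (s * q ^ hcount P (fst P - I) I * Poly_Mapping.lookup (delta q (pp_class (pp_restrict P (fst P - I)))) r))
      = (\<Sum>J\<in>{J. biideal (pp_restrict P (A - I)) J}.
      Poly_Mapping.single ((pp_class (pp_restrict P (A - I - J)), pp_class (pp_restrict P J)), pp_class (pp_restrict P I))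
        (s * (q ^ hcount P (A - I) I * q ^ hcount P (A - I - J) J)))"
      unfolding delta_raw_restrict_expand[OF pp Diff_subset]
      by (subst push_sum[where g = "\<lambda>r. ((fst r, snd r), pp_class (pp_restrict P I))"])
         (auto simp: P fin2[unfolded P] mult.assoc)
  qed
  also have "\<dots> = (\<Sum>K\<in>{K. biideal P K}. \<Sum>L\<in>{L. biideal (pp_restrict P K) L}.
      Poly_Mapping.single ((pp_class (pp_restrict P (A - K)), pp_class (pp_restrict P (K - L))), pp_class (pp_restrict P L))
        (s * (q ^ hcount P (A - K) K * q ^ hcount P (K - L) L)))"
    using coassoc_core[where A=A and H=H and R=R and q=q and s=s] pp unfolding P by simp
  also have "\<dots> = (\<Sum>I\<in>{I. biideal P I}. \<Sum>r\<in>Poly_Mapping.keys (delta q (pp_class (pp_restrict P I))).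
      Poly_Mapping.single ((pp_class (pp_restrict P (fst P - I)), fst r), snd r)
        (s * q ^ hcount P (fst P - I) I * Poly_Mapping.lookup (delta q (pp_class (pp_restrict P I))) r))"
  proof (rule sum.cong[OF refl])
    fix K assume K: "K \<in> {I. biideal P I}"
    show "(\<Sum>L\<in>{L. biideal (pp_restrict P K) L}.
      Poly_Mapping.single ((pp_class (pp_restrict P (A - K)), pp_class (pp_restrict P (K - L))), pp_class (pp_restrict P L))
        (s * (q ^ hcount P (A - K) K * q ^ hcount P (K - L) L))) =
      (\<Sum>r\<in>Poly_Mapping.keys (delta q (pp_class (pp_restrict P K))).
      Poly_Mapping.single ((pp_class (pp_restrict P (fst P - K)), fst r), snd r)
        (s * q ^ hcount P (fst P - K) K * Poly_Mapping.lookup (delta q (pp_class (pp_restrict P K))) r))"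
    proof -
      have KA: "K \<subseteq> fst P" using K biideal_sub by blast
      show ?thesis
        unfolding delta_raw_restrict_expand[OF pp KA]
        by (subst push_sum[where g = "\<lambda>r. ((pp_class (pp_restrict P (fst P - K)), fst r), snd r)"])
           (use KA in \<open>auto simp: P fin2[unfolded P] mult.assoc\<close>)
    qed
  qed
  finally show ?thesis .
qed

lemma sum_Sigma': assumes "finite A" "\<And>a. a \<in> A \<Longrightarrow> finite (B a)"
  shows "(\<Sum>a\<in>A. \<Sum>b\<in>B a. g (a, b)) = (\<Sum>x\<in>Sigma A B. g x)"
  using sum.Sigma[OF assms(1), of B "\<lambda>a b. g (a, b)"] assms(2) by (simp add: case_prod_eta)

lemma coassoc:
  fixes q :: "'k::field" and v :: "ppc \<Rightarrow>\<^sub>0 'k"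
  assumes kv: "Poly_Mapping.keys v \<subseteq> PP"
  shows "delta_tensor_id (delta q) (delta_lin q v) = id_tensor_delta (delta q) (delta_lin q v)"
proof -
  define BI where "BI = (\<lambda>a. {I. biideal (pp_rep a) I})"
  define k where "k = (\<lambda>(a, I). (pp_class (pp_restrict (pp_rep a) (fst (pp_rep a) - I)), pp_class (pp_restrict (pp_rep a) I)))"
  define w where "w = (\<lambda>(a, I). Poly_Mapping.lookup v a * q ^ hcount (pp_rep a) (fst (pp_rep a) - I) I)"
  have ppa: "is_pp (pp_rep a)" if "a \<in> Poly_Mapping.keys v" for a using that kv PP_rep by blast
  have finBI: "finite (BI a)" if "a \<in> Poly_Mapping.keys v" for a
    unfolding BI_def using finite_biideals[OF ppa[OF that]] .
  have finS: "finite (Sigma (Poly_Mapping.keys v) BI)" using finBI by auto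
  have dl: "delta_lin q v = (\<Sum>x\<in>Sigma (Poly_Mapping.keys v) BI. Poly_Mapping.single (k x) (w x))"
  proof -
    have "delta_lin q v = (\<Sum>a\<in>Poly_Mapping.keys v. \<Sum>I\<in>BI a. Poly_Mapping.single (k (a, I)) (w (a, I)))"
      unfolding delta_lin_def
    proof (rule sum.cong[OF refl])
      fix a assume a: "a \<in> Poly_Mapping.keys v"
      show "Poly_Mapping.map (\<lambda>c. Poly_Mapping.lookup v a * c) (delta q a) = (\<Sum>I\<in>BI a. Poly_Mapping.single (k (a, I)) (w (a, I)))"
        unfolding delta_def delta_raw_def map_scale_sum[OF finBI[OF a, unfolded BI_def]]
        by (simp add: k_def w_def BI_def)
    qed
    also have "\<dots> = (\<Sum>x\<in>Sigma (Poly_Mapping.keys v) BI. Poly_Mapping.single (k x) (w x))"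
      by (rule sum_Sigma'[where g = "\<lambda>x. Poly_Mapping.single (k x) (w x)"]) (auto intro: finBI)
    finally show ?thesis .
  qed
  have "delta_tensor_id (delta q) (delta_lin q v) =
    (\<Sum>a\<in>Poly_Mapping.keys v. \<Sum>I\<in>BI a. \<Sum>r \<in> Poly_Mapping.keys (delta q (fst (k (a, I)))).
      Poly_Mapping.single ((fst r, snd r), snd (k (a, I))) (w (a, I) * Poly_Mapping.lookup (delta q (fst (k (a, I)))) r))"
    unfolding dl dti_sum[OF finS] by (rule sum_Sigma'[symmetric]) (auto intro: finBI)
  also have "\<dots> = (\<Sum>a\<in>Poly_Mapping.keys v. \<Sum>I\<in>BI a. \<Sum>r \<in> Poly_Mapping.keys (delta q (snd (k (a, I)))).
      Poly_Mapping.single ((fst (k (a, I)), fst r), snd r) (w (a, I) * Poly_Mapping.lookup (delta q (snd (k (a, I)))) r))"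
  proof (rule sum.cong[OF refl])
    fix a assume a: "a \<in> Poly_Mapping.keys v"
    show "(\<Sum>I\<in>BI a. \<Sum>r \<in> Poly_Mapping.keys (delta q (fst (k (a, I)))).
      Poly_Mapping.single ((fst r, snd r), snd (k (a, I))) (w (a, I) * Poly_Mapping.lookup (delta q (fst (k (a, I)))) r)) =
      (\<Sum>I\<in>BI a. \<Sum>r \<in> Poly_Mapping.keys (delta q (snd (k (a, I)))).
      Poly_Mapping.single ((fst (k (a, I)), fst r), snd r) (w (a, I) * Poly_Mapping.lookup (delta q (snd (k (a, I)))) r))"
      using coassoc_one[OF ppa[OF a], where q = q and s = "Poly_Mapping.lookup v a"]
      by (simp add: k_def w_def BI_def)
  qed
  also have "\<dots> = id_tensor_delta (delta q) (delta_lin q v)"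
    unfolding dl itd_sum[OF finS] by (rule sum_Sigma') (auto intro: finBI)
  finally show ?thesis .
qed

section \<open>Gluing\<close>

definition glue :: "bool \<Rightarrow> ppraw \<Rightarrow> ppraw \<Rightarrow> ppraw" where
  "glue b P Q = (case P of (A, H, R) \<Rightarrow> case Q of (B, H', R') \<Rightarrow>
     (encl ` A \<union> encr ` B,
      map_prod encl encl ` H \<union> map_prod encr encr ` H' \<union> (if b then encl ` A \<times> encr ` B else {}),
      map_prod encl encl ` R \<union> map_prod encr encr ` R' \<union> (if b then {} else encl ` A \<times> encr ` B)))"

lemma pp_m_glue: "pp_m_raw P Q = glue False P Q"
  by (cases P; cases Q) (simp add: pp_m_raw_def glue_def)

lemma pp_tri_glue: "pp_tri_raw P Q = glue True P Q"
  by (cases P; cases Q) (simp add: pp_tri_raw_def glue_def)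

lemma encl_inj[simp]: "encl a = encl b \<longleftrightarrow> a = b" by (simp add: encl_def)
lemma encr_inj[simp]: "encr a = encr b \<longleftrightarrow> a = b" by (simp add: encr_def)
lemma encl_encr[simp]: "encl a \<noteq> encr b" "encr b \<noteq> encl a" unfolding encl_def encr_def by presburger+
lemma inj_encl: "inj encl" and inj_encr: "inj encr" by (auto intro: injI)

lemma is_pp_expand: "is_pp (A, H, R) \<longleftrightarrow> finite A \<and> H \<subseteq> A \<times> A \<and> R \<subseteq> A \<times> A \<and>
   (\<forall>x\<in>A. (x, x) \<in> H) \<and> (\<forall>x\<in>A. (x, x) \<in> R) \<and>
   (\<forall>x y z. (x, y) \<in> H \<longrightarrow> (y, z) \<in> H \<longrightarrow> (x, z) \<in> H) \<and>
   (\<forall>x y z. (x, y) \<in> R \<longrightarrow> (y, z) \<in> R \<longrightarrow> (x, z) \<in> R) \<and>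
   (\<forall>x y. (x, y) \<in> H \<longrightarrow> (y, x) \<in> H \<longrightarrow> x = y) \<and>
   (\<forall>x y. (x, y) \<in> R \<longrightarrow> (y, x) \<in> R \<longrightarrow> x = y) \<and>
   (\<forall>x\<in>A. \<forall>y\<in>A. x \<noteq> y \<longrightarrow>
        (((x, y) \<in> H \<or> (y, x) \<in> H) \<longleftrightarrow> \<not> ((x, y) \<in> R \<or> (y, x) \<in> R)))"
  unfolding is_pp_def partial_order_on_def preorder_on_def refl_on_def trans_def antisym_def prod.case
  by (rule iffI; (elim conjE)?; (intro conjI)?; assumption)

lemma mem_map_encl1[simp]:
  "(encl a, encl a') \<in> map_prod encl encl ` S \<longleftrightarrow> (a, a') \<in> S"
  "(encr a, encr a') \<in> map_prod encr encr ` S \<longleftrightarrow> (a, a') \<in> S"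
proof -
  have i1: "inj (map_prod encl encl)" and i2: "inj (map_prod encr encr)"
    using map_prod_inj_on[OF inj_encl inj_encl] map_prod_inj_on[OF inj_encr inj_encr] by simp_all
  show "(encl a, encl a') \<in> map_prod encl encl ` S \<longleftrightarrow> (a, a') \<in> S"
    using inj_image_mem_iff[OF i1, of "(a, a')" S] by simp
  show "(encr a, encr a') \<in> map_prod encr encr ` S \<longleftrightarrow> (a, a') \<in> S"
    using inj_image_mem_iff[OF i2, of "(a, a')" S] by simp
qed

lemma mem_map_encl[simp]:
  "(encl a, encl a') \<notin> map_prod encr encr ` S"
  "(encr a, encr a') \<notin> map_prod encl encl ` S"
  "(encl a, encr a') \<notin> map_prod encl encl ` S"
  "(encl a, encr a') \<notin> map_prod encr encr ` S"
  "(encr a, encl a') \<notin> map_prod encl encl ` S"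
  "(encr a, encl a') \<notin> map_prod encr encr ` S"
  by (auto simp: image_iff)

lemma mem_encl_img[simp]: "encl a \<in> encl ` S \<longleftrightarrow> a \<in> S" "encr a \<in> encr ` S \<longleftrightarrow> a \<in> S"
  "encl a \<notin> encr ` S" "encr a \<notin> encl ` S"
  by (auto simp: image_iff)

lemma ball_glue: "(\<forall>x\<in>encl ` A \<union> encr ` B. P x) \<longleftrightarrow> (\<forall>a\<in>A. P (encl a)) \<and> (\<forall>c\<in>B. P (encr c))"
  by blast

lemma trans_on_sub: assumes "r \<subseteq> C \<times> C"
  shows "(\<forall>x y z. (x, y) \<in> r \<longrightarrow> (y, z) \<in> r \<longrightarrow> (x, z) \<in> r) \<longleftrightarrow>
         (\<forall>x\<in>C. \<forall>y\<in>C. \<forall>z\<in>C. (x, y) \<in> r \<longrightarrow> (y, z) \<in> r \<longrightarrow> (x, z) \<in> r)"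
  using assms by blast

lemma antisym_on_sub: assumes "r \<subseteq> C \<times> C"
  shows "(\<forall>x y. (x, y) \<in> r \<longrightarrow> (y, x) \<in> r \<longrightarrow> x = y) \<longleftrightarrow>
         (\<forall>x\<in>C. \<forall>y\<in>C. (x, y) \<in> r \<longrightarrow> (y, x) \<in> r \<longrightarrow> x = y)"
  using assms by blast

lemma is_pp_glue: assumes "is_pp (A, H, R)" "is_pp (B, H', R')" shows "is_pp (glue b (A, H, R) (B, H', R'))"
proof -
  have a: "finite A" "H \<subseteq> A \<times> A" "R \<subseteq> A \<times> A" "\<forall>x\<in>A. (x, x) \<in> H" "\<forall>x\<in>A. (x, x) \<in> R"
   "\<forall>x y z. (x, y) \<in> H \<longrightarrow> (y, z) \<in> H \<longrightarrow> (x, z) \<in> H"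
   "\<forall>x y z. (x, y) \<in> R \<longrightarrow> (y, z) \<in> R \<longrightarrow> (x, z) \<in> R"
   "\<forall>x y. (x, y) \<in> H \<longrightarrow> (y, x) \<in> H \<longrightarrow> x = y"
   "\<forall>x y. (x, y) \<in> R \<longrightarrow> (y, x) \<in> R \<longrightarrow> x = y"
   "\<forall>x\<in>A. \<forall>y\<in>A. x \<noteq> y \<longrightarrow> (((x, y) \<in> H \<or> (y, x) \<in> H) \<longleftrightarrow> \<not> ((x, y) \<in> R \<or> (y, x) \<in> R))"
    using assms(1) unfolding is_pp_expand apply - apply (elim conjE, assumption)+ done
  have b: "finite B" "H' \<subseteq> B \<times> B" "R' \<subseteq> B \<times> B" "\<forall>x\<in>B. (x, x) \<in> H'" "\<forall>x\<in>B. (x, x) \<in> R'"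
   "\<forall>x y z. (x, y) \<in> H' \<longrightarrow> (y, z) \<in> H' \<longrightarrow> (x, z) \<in> H'"
   "\<forall>x y z. (x, y) \<in> R' \<longrightarrow> (y, z) \<in> R' \<longrightarrow> (x, z) \<in> R'"
   "\<forall>x y. (x, y) \<in> H' \<longrightarrow> (y, x) \<in> H' \<longrightarrow> x = y"
   "\<forall>x y. (x, y) \<in> R' \<longrightarrow> (y, x) \<in> R' \<longrightarrow> x = y"
   "\<forall>x\<in>B. \<forall>y\<in>B. x \<noteq> y \<longrightarrow> (((x, y) \<in> H' \<or> (y, x) \<in> H') \<longleftrightarrow> \<not> ((x, y) \<in> R' \<or> (y, x) \<in> R'))"
    using assms(2) unfolding is_pp_expand apply - apply (elim conjE, assumption)+ done
  let ?C = "encl ` A \<union> encr ` B"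
  let ?HG = "map_prod encl encl ` H \<union> map_prod encr encr ` H' \<union> (if b then encl ` A \<times> encr ` B else {})"
  let ?RG = "map_prod encl encl ` R \<union> map_prod encr encr ` R' \<union> (if b then {} else encl ` A \<times> encr ` B)"
  have sH: "?HG \<subseteq> ?C \<times> ?C" using a(2) b(2) by auto
  have sR: "?RG \<subseteq> ?C \<times> ?C" using a(3) b(3) by auto
  have "is_pp (?C, ?HG, ?RG)"
    unfolding is_pp_expand trans_on_sub[OF sH] trans_on_sub[OF sR] antisym_on_sub[OF sH] antisym_on_sub[OF sR]
  proof (intro conjI sH sR)
    show "finite ?C" using a b by simp
    show "\<forall>x\<in>?C. (x, x) \<in> ?HG" unfolding ball_glue using a(4) b(4) by (cases b; simp (no_asm); blast)
    show "\<forall>x\<in>?C. (x, x) \<in> ?RG" unfolding ball_glue using a(5) b(5) by (cases b; simp (no_asm); blast)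
    show "\<forall>x\<in>?C. \<forall>y\<in>?C. \<forall>z\<in>?C. (x, y) \<in> ?HG \<longrightarrow> (y, z) \<in> ?HG \<longrightarrow> (x, z) \<in> ?HG"
      unfolding ball_glue using a(2,6) b(2,6) by (cases b; simp (no_asm); blast)
    show "\<forall>x\<in>?C. \<forall>y\<in>?C. \<forall>z\<in>?C. (x, y) \<in> ?RG \<longrightarrow> (y, z) \<in> ?RG \<longrightarrow> (x, z) \<in> ?RG"
      unfolding ball_glue using a(3,7) b(3,7) by (cases b; simp (no_asm); blast)
    show "\<forall>x\<in>?C. \<forall>y\<in>?C. (x, y) \<in> ?HG \<longrightarrow> (y, x) \<in> ?HG \<longrightarrow> x = y"
      unfolding ball_glue using a(8,9) b(8,9) by (cases b; simp (no_asm); blast)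
    show "\<forall>x\<in>?C. \<forall>y\<in>?C. (x, y) \<in> ?RG \<longrightarrow> (y, x) \<in> ?RG \<longrightarrow> x = y"
      unfolding ball_glue using a(8,9) b(8,9) by (cases b; simp (no_asm); blast)
    show "\<forall>x\<in>?C. \<forall>y\<in>?C. x \<noteq> y \<longrightarrow> (((x, y) \<in> ?HG \<or> (y, x) \<in> ?HG) \<longleftrightarrow> \<not> ((x, y) \<in> ?RG \<or> (y, x) \<in> ?RG))"
      unfolding ball_glue using a(10) b(10) by (cases b; simp (no_asm); blast)
  qed
  thus ?thesis unfolding glue_def prod.case .
qed

definition hmap :: "(nat \<Rightarrow> nat) \<Rightarrow> (nat \<Rightarrow> nat) \<Rightarrow> nat \<Rightarrow> nat" where
  "hmap f g n = (if even n then encl (f (n div 2)) else encr (g (n div 2)))"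

lemma hmap_simps[simp]: "hmap f g (encl a) = encl (f a)" "hmap f g (encr c) = encr (g c)"
  by (simp_all add: hmap_def encl_def encr_def)

lemma iso_by_glue: assumes f: "iso_by f (A, H, R) (A', H1, R1)" and g: "iso_by g (B, H', R') (B', H1', R1')"
  shows "iso_by (hmap f g) (glue b (A, H, R) (B, H', R')) (glue b (A', H1, R1) (B', H1', R1'))"
proof -
  have bf: "bij_betw f A A'" and bg: "bij_betw g B B'" using f g unfolding iso_by_def by simp_all
  have of: "\<forall>x\<in>A. \<forall>y\<in>A. ((x, y) \<in> H \<longleftrightarrow> (f x, f y) \<in> H1) \<and> ((x, y) \<in> R \<longleftrightarrow> (f x, f y) \<in> R1)"
    using f unfolding iso_by_def by simp
  have og: "\<forall>x\<in>B. \<forall>y\<in>B. ((x, y) \<in> H' \<longleftrightarrow> (g x, g y) \<in> H1') \<and> ((x, y) \<in> R' \<longleftrightarrow> (g x, g y) \<in> R1')"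
    using g unfolding iso_by_def by simp
  have fA: "f ` A = A'" "g ` B = B'" using bf bg bij_betw_imp_surj_on by blast+
  have injf: "inj_on f A" "inj_on g B" using bf bg bij_betw_imp_inj_on by blast+
  have img: "hmap f g ` (encl ` A \<union> encr ` B) = encl ` A' \<union> encr ` B'"
    unfolding fA[symmetric] by (simp add: image_Un image_image)
  have inj: "inj_on (hmap f g) (encl ` A \<union> encr ` B)"
  proof (rule inj_onI)
    fix x y assume xy: "x \<in> encl ` A \<union> encr ` B" "y \<in> encl ` A \<union> encr ` B" "hmap f g x = hmap f g y"
    show "x = y"
    proof (cases "x \<in> encl ` A")
      case True
      then obtain a where a: "a \<in> A" "x = encl a" by blast
      show ?thesis
      proof (cases "y \<in> encl ` A")
        case True
        then obtain a' where a': "a' \<in> A" "y = encl a'" by blast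
        have "f a = f a'" using xy(3) a a' by simp
        thus ?thesis using inj_onD[OF injf(1)] a a' by blast
      next
        case False
        then obtain c where "y = encr c" using xy(2) by blast
        thus ?thesis using xy(3) a by simp
      qed
    next
      case False
      then obtain c where c: "c \<in> B" "x = encr c" using xy(1) by blast
      show ?thesis
      proof (cases "y \<in> encl ` A")
        case True
        then obtain a' where "y = encl a'" by blast
        thus ?thesis using xy(3) c by simp
      next
        case False
        then obtain c' where c': "c' \<in> B" "y = encr c'" using xy(2) by blast
        have "g c = g c'" using xy(3) c c' by simp
        thus ?thesis using inj_onD[OF injf(2)] c c' by blast
      qed
    qed
  qed
  have bij: "bij_betw (hmap f g) (encl ` A \<union> encr ` B) (encl ` A' \<union> encr ` B')"
    using inj img by (simp add: bij_betw_def)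
  have fin: "f a \<in> A'" if "a \<in> A" for a using that fA by blast
  have gin: "g c \<in> B'" if "c \<in> B" for c using that fA by blast
  show ?thesis unfolding iso_by_def glue_def prod.case fst_conv snd_conv
    using bij of og fin gin by (cases b; simp add: ball_glue)
qed

lemma pp_iso_glue: assumes "pp_iso X X'" "pp_iso Y Y'" shows "pp_iso (glue b X Y) (glue b X' Y')"
proof -
  obtain f g where "iso_by f X X'" "iso_by g Y Y'" using assms pp_iso_iff by blast
  thus ?thesis using iso_by_glue pp_iso_iff by (cases X; cases X'; cases Y; cases Y') blast
qed

lemma class_glue: assumes "is_pp X" "is_pp Y"
  shows "pp_class (glue b (pp_rep (pp_class X)) (pp_rep (pp_class Y))) = pp_class (glue b X Y)"
  by (rule pp_class_eq, rule pp_iso_glue) (use rep_class assms pp_iso_sym in blast)+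

lemma pp_m_class: "is_pp X \<Longrightarrow> is_pp Y \<Longrightarrow> pp_m (pp_class X) (pp_class Y) = pp_class (glue False X Y)"
  unfolding pp_m_def pp_m_glue by (rule class_glue)

lemma pp_tri_class: "is_pp X \<Longrightarrow> is_pp Y \<Longrightarrow> pp_tri (pp_class X) (pp_class Y) = pp_class (glue True X Y)"
  unfolding pp_tri_def pp_tri_glue by (rule class_glue)

lemma glue_unfold: "glue b (A, H, R) (B, H', R') = (encl ` A \<union> encr ` B,
      map_prod encl encl ` H \<union> map_prod encr encr ` H' \<union> (if b then encl ` A \<times> encr ` B else {}),
      map_prod encl encl ` R \<union> map_prod encr encr ` R' \<union> (if b then {} else encl ` A \<times> encr ` B))"
  by (simp add: glue_def)

lemma is_pp_sub: assumes "is_pp (A, H, R)" shows "H \<subseteq> A \<times> A" "R \<subseteq> A \<times> A" "finite A"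
  using assms unfolding is_pp_def partial_order_on_def preorder_on_def by auto

lemma biideal_glue_iff:
  assumes X: "is_pp (A, H, R)" and Y: "is_pp (B, H', R')"
  shows "biideal (glue b (A, H, R) (B, H', R')) I \<longleftrightarrow>
     (\<exists>I1. biideal (A, H, R) I1 \<and> I = encl ` I1 \<union> encr ` B) \<or> (\<exists>I2. biideal (B, H', R') I2 \<and> I = encr ` I2)"
proof -
  have sX: "H \<subseteq> A \<times> A" "R \<subseteq> A \<times> A" using is_pp_sub[OF X] by auto
  have sY: "H' \<subseteq> B \<times> B" "R' \<subseteq> B \<times> B" using is_pp_sub[OF Y] by auto
  let ?HG = "map_prod encl encl ` H \<union> map_prod encr encr ` H' \<union> (if b then encl ` A \<times> encr ` B else {})"
  let ?RG = "map_prod encl encl ` R \<union> map_prod encr encr ` R' \<union> (if b then {} else encl ` A \<times> encr ` B)"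
  have cross: "(encl a, encr c) \<in> ?HG \<or> (encl a, encr c) \<in> ?RG" if "a \<in> A" "c \<in> B" for a c
    using that by (cases b) simp_all
  show ?thesis unfolding glue_unfold bi_P[of "encl ` A \<union> encr ` B"]
  proof (rule iffI)
    assume I: "I \<subseteq> encl ` A \<union> encr ` B \<and> (\<forall>x y. x \<in> I \<and> (x, y) \<in> ?HG \<longrightarrow> y \<in> I) \<and> (\<forall>x y. x \<in> I \<and> (x, y) \<in> ?RG \<longrightarrow> y \<in> I)"
    hence IC: "I \<subseteq> encl ` A \<union> encr ` B" and uH: "\<And>x y. x \<in> I \<Longrightarrow> (x, y) \<in> ?HG \<Longrightarrow> y \<in> I"
      and uR: "\<And>x y. x \<in> I \<Longrightarrow> (x, y) \<in> ?RG \<Longrightarrow> y \<in> I" by blast+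
    define I1 where "I1 = encl -` I"
    define I2 where "I2 = encr -` I"
    have Ieq: "I = encl ` I1 \<union> encr ` I2" unfolding I1_def I2_def using IC by auto
    have I1A: "I1 \<subseteq> A" unfolding I1_def using IC by auto
    have I2B: "I2 \<subseteq> B" unfolding I2_def using IC by auto
    have b1: "biideal (A, H, R) I1" unfolding bi_P
    proof (intro conjI allI impI I1A)
      fix x y assume "x \<in> I1 \<and> (x, y) \<in> H"
      hence "encl x \<in> I" "(encl x, encl y) \<in> ?HG" unfolding I1_def by auto
      hence "encl y \<in> I" by (rule uH)
      thus "y \<in> I1" unfolding I1_def by simp
    next
      fix x y assume "x \<in> I1 \<and> (x, y) \<in> R"
      hence "encl x \<in> I" "(encl x, encl y) \<in> ?RG" unfolding I1_def by auto
      hence "encl y \<in> I" by (rule uR)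
      thus "y \<in> I1" unfolding I1_def by simp
    qed
    have b2: "biideal (B, H', R') I2" unfolding bi_P
    proof (intro conjI allI impI I2B)
      fix x y assume "x \<in> I2 \<and> (x, y) \<in> H'"
      hence "encr x \<in> I" "(encr x, encr y) \<in> ?HG" unfolding I2_def by auto
      hence "encr y \<in> I" by (rule uH)
      thus "y \<in> I2" unfolding I2_def by simp
    next
      fix x y assume "x \<in> I2 \<and> (x, y) \<in> R'"
      hence "encr x \<in> I" "(encr x, encr y) \<in> ?RG" unfolding I2_def by auto
      hence "encr y \<in> I" by (rule uR)
      thus "y \<in> I2" unfolding I2_def by simp
    qed
    show "(\<exists>I1. biideal (A, H, R) I1 \<and> I = encl ` I1 \<union> encr ` B) \<or> (\<exists>I2. biideal (B, H', R') I2 \<and> I = encr ` I2)"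
    proof (cases "I1 = {}")
      case True
      thus ?thesis using b2 Ieq by auto
    next
      case False
      then obtain a where a: "a \<in> I1" by blast
      have "B \<subseteq> I2"
      proof
        fix c assume c: "c \<in> B"
        have "encl a \<in> I" using a unfolding I1_def by simp
        moreover have "a \<in> A" using a I1A by blast
        ultimately have "encr c \<in> I" using cross[of a c] c uH uR by metis
        thus "c \<in> I2" unfolding I2_def by simp
      qed
      hence "I2 = B" using I2B by blast
      thus ?thesis using b1 Ieq by blast
    qed
  next
    assume "(\<exists>I1. biideal (A, H, R) I1 \<and> I = encl ` I1 \<union> encr ` B) \<or> (\<exists>I2. biideal (B, H', R') I2 \<and> I = encr ` I2)"
    thus "I \<subseteq> encl ` A \<union> encr ` B \<and> (\<forall>x y. x \<in> I \<and> (x, y) \<in> ?HG \<longrightarrow> y \<in> I) \<and> (\<forall>x y. x \<in> I \<and> (x, y) \<in> ?RG \<longrightarrow> y \<in> I)"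
    proof (elim disjE exE conjE)
      fix I1 assume b1: "biideal (A, H, R) I1" and Ieq: "I = encl ` I1 \<union> encr ` B"
      have I1A: "I1 \<subseteq> A" and u1: "\<And>x y. x \<in> I1 \<Longrightarrow> (x, y) \<in> H \<Longrightarrow> y \<in> I1" and u2: "\<And>x y. x \<in> I1 \<Longrightarrow> (x, y) \<in> R \<Longrightarrow> y \<in> I1"
        using b1 unfolding bi_P by blast+
      show ?thesis
      proof (intro conjI allI impI)
        show "I \<subseteq> encl ` A \<union> encr ` B" using Ieq I1A by blast
      next
        fix x y assume xy: "x \<in> I \<and> (x, y) \<in> ?HG"
        show "y \<in> I"
        proof (cases "(x, y) \<in> map_prod encl encl ` H")
          case True
          then obtain a a' where "x = encl a" "y = encl a'" "(a, a') \<in> H" by auto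
          thus ?thesis using xy Ieq u1 by auto
        next
          case False
          hence "(x, y) \<in> map_prod encr encr ` H' \<or> (b \<and> (x, y) \<in> encl ` A \<times> encr ` B)" using xy by (cases b) auto
          thus ?thesis using Ieq sY by (auto split: if_splits)
        qed
      next
        fix x y assume xy: "x \<in> I \<and> (x, y) \<in> ?RG"
        show "y \<in> I"
        proof (cases "(x, y) \<in> map_prod encl encl ` R")
          case True
          then obtain a a' where "x = encl a" "y = encl a'" "(a, a') \<in> R" by auto
          thus ?thesis using xy Ieq u2 by auto
        next
          case False
          hence "(x, y) \<in> map_prod encr encr ` R' \<or> (\<not> b \<and> (x, y) \<in> encl ` A \<times> encr ` B)" using xy by (cases b) auto
          thus ?thesis using Ieq sY by (auto split: if_splits)
        qed
      qed
    next
      fix I2 assume b2: "biideal (B, H', R') I2" and Ieq: "I = encr ` I2"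
      have I2B: "I2 \<subseteq> B" and u1: "\<And>x y. x \<in> I2 \<Longrightarrow> (x, y) \<in> H' \<Longrightarrow> y \<in> I2" and u2: "\<And>x y. x \<in> I2 \<Longrightarrow> (x, y) \<in> R' \<Longrightarrow> y \<in> I2"
        using b2 unfolding bi_P by blast+
      show ?thesis
      proof (intro conjI allI impI)
        show "I \<subseteq> encl ` A \<union> encr ` B" using Ieq I2B by blast
      next
        fix x y assume xy: "x \<in> I \<and> (x, y) \<in> ?HG"
        then obtain c where c: "x = encr c" "c \<in> I2" using Ieq by blast
        have "(x, y) \<in> map_prod encr encr ` H'" using xy c by (cases b) auto
        then obtain c1 c' where "x = encr c1" "y = encr c'" "(c1, c') \<in> H'" by auto
        thus "y \<in> I" using c Ieq u1 by auto
      next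
        fix x y assume xy: "x \<in> I \<and> (x, y) \<in> ?RG"
        then obtain c where c: "x = encr c" "c \<in> I2" using Ieq by blast
        have "(x, y) \<in> map_prod encr encr ` R'" using xy c by (cases b) auto
        then obtain c1 c' where "x = encr c1" "y = encr c'" "(c1, c') \<in> R'" by auto
        thus "y \<in> I" using c Ieq u2 by auto
      qed
    qed
  qed
qed

lemma vimage_encl_glue: "encl -` (encl ` I1 \<union> encr ` B) = I1" "encr -` (encl ` I1 \<union> encr ` B) = B"
  by auto

lemma sum_glue_biideals:
  fixes f :: "nat set \<Rightarrow> 'a::ab_group_add"
  assumes X: "is_pp (A, H, R)" and Y: "is_pp (B, H', R')"
  shows "(\<Sum>I\<in>{I. biideal (glue b (A, H, R) (B, H', R')) I}. f I) =
    (\<Sum>I1\<in>{I1. biideal (A, H, R) I1}. f (encl ` I1 \<union> encr ` B)) + (\<Sum>I2\<in>{I2. biideal (B, H', R') I2}. f (encr ` I2)) - f (encr ` B)"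
proof -
  let ?G1 = "(\<lambda>I1. encl ` I1 \<union> encr ` B) ` {I1. biideal (A, H, R) I1}"
  let ?G2 = "(`) encr ` {I2. biideal (B, H', R') I2}"
  have eq: "{I. biideal (glue b (A, H, R) (B, H', R')) I} = ?G1 \<union> ?G2"
    unfolding set_eq_iff mem_Collect_eq biideal_glue_iff[OF X Y] Un_iff image_iff Bex_def mem_Collect_eq by blast
  have fin1: "finite {I1. biideal (A, H, R) I1}" by (rule finite_biideals[OF X])
  have fin2: "finite {I2. biideal (B, H', R') I2}" by (rule finite_biideals[OF Y])
  have sY: "H' \<subseteq> B \<times> B" "R' \<subseteq> B \<times> B" using is_pp_sub[OF Y] by auto
  have e1: "biideal (A, H, R) {}" unfolding bi_P by blast
  have e2: "biideal (B, H', R') B" unfolding bi_P using sY by blast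
  have int: "?G1 \<inter> ?G2 = {encr ` B}"
  proof
    show "{encr ` B} \<subseteq> ?G1 \<inter> ?G2"
    proof -
      have "encr ` B \<in> ?G1" using e1 by (intro image_eqI[where x = "{}"]) auto
      moreover have "encr ` B \<in> ?G2" using e2 by blast
      ultimately show ?thesis by blast
    qed
    show "?G1 \<inter> ?G2 \<subseteq> {encr ` B}"
    proof
      fix J assume "J \<in> ?G1 \<inter> ?G2"
      then obtain I1 I2 where J: "J = encl ` I1 \<union> encr ` B" "J = encr ` I2" by blast
      have "encl -` J = {}" using J(2) by auto
      hence "I1 = {}" using J(1) vimage_encl_glue(1)[of I1 B] by simp
      thus "J \<in> {encr ` B}" using J(1) by simp
    qed
  qed
  have inj1: "inj_on (\<lambda>I1. encl ` I1 \<union> encr ` B) {I1. biideal (A, H, R) I1}"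
  proof (rule inj_onI)
    fix I1 I1' assume "encl ` I1 \<union> encr ` B = encl ` I1' \<union> encr ` B"
    hence "encl -` (encl ` I1 \<union> encr ` B) = encl -` (encl ` I1' \<union> encr ` B)" by simp
    thus "I1 = I1'" by (simp only: vimage_encl_glue)
  qed
  have inj2: "inj_on ((`) encr) {I2. biideal (B, H', R') I2}"
    by (rule inj_on_image, rule inj_on_subset[OF inj_encr]) simp
  have "(\<Sum>I\<in>?G1 \<union> ?G2. f I) + (\<Sum>I\<in>?G1 \<inter> ?G2. f I) = (\<Sum>I\<in>?G1. f I) + (\<Sum>I\<in>?G2. f I)"
    by (rule sum.union_inter) (use fin1 fin2 in auto)
  moreover have "(\<Sum>I\<in>?G1. f I) = (\<Sum>I1\<in>{I1. biideal (A, H, R) I1}. f (encl ` I1 \<union> encr ` B))"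
    by (subst sum.reindex[OF inj1]) simp
  moreover have "(\<Sum>I\<in>?G2. f I) = (\<Sum>I2\<in>{I2. biideal (B, H', R') I2}. f (encr ` I2))"
    by (subst sum.reindex[OF inj2]) simp
  ultimately show ?thesis unfolding eq int by (simp add: algebra_simps)
qed

lemma restrict_full: "is_pp (A, H, R) \<Longrightarrow> pp_restrict (A, H, R) A = (A, H, R)"
  using is_pp_sub[of A H R] by (auto simp: pp_restrict_def)

lemma cls_restrict_encl: assumes "A' \<subseteq> A"
  shows "pp_class (pp_restrict (glue b (A, H, R) (B, H', R')) (encl ` A')) = pp_class (pp_restrict (A, H, R) A')"
proof -
  have "iso_by encl (pp_restrict (A, H, R) A') (pp_restrict (glue b (A, H, R) (B, H', R')) (encl ` A'))"
    unfolding iso_by_def glue_unfold pp_restrict_def prod.case fst_conv snd_conv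
    by (cases b) (auto simp: inj_on_imp_bij_betw inj_on_subset[OF inj_encl])
  thus ?thesis using pp_class_eq pp_iso_iff pp_iso_sym by metis
qed

lemma cls_restrict_encr: assumes "B' \<subseteq> B"
  shows "pp_class (pp_restrict (glue b (A, H, R) (B, H', R')) (encr ` B')) = pp_class (pp_restrict (B, H', R') B')"
proof -
  have "iso_by encr (pp_restrict (B, H', R') B') (pp_restrict (glue b (A, H, R) (B, H', R')) (encr ` B'))"
    unfolding iso_by_def glue_unfold pp_restrict_def prod.case fst_conv snd_conv
    by (cases b) (auto simp: inj_on_imp_bij_betw inj_on_subset[OF inj_encr])
  thus ?thesis using pp_class_eq pp_iso_iff pp_iso_sym by metis
qed

lemma restrict_glue1: assumes X: "is_pp (A, H, R)" and Y: "is_pp (B, H', R')" and I1: "I1 \<subseteq> A"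
  shows "pp_restrict (glue b (A, H, R) (B, H', R')) (encl ` I1 \<union> encr ` B) = glue b (pp_restrict (A, H, R) I1) (B, H', R')"
proof -
  have sY: "H' \<subseteq> B \<times> B" "R' \<subseteq> B \<times> B" using is_pp_sub[OF Y] by auto
  have e1: "map_prod encl encl ` S \<inter> (encl ` I1 \<union> encr ` B) \<times> (encl ` I1 \<union> encr ` B) = map_prod encl encl ` (S \<inter> I1 \<times> I1)" for S
    by auto
  have e2: "map_prod encr encr ` S \<inter> (encl ` I1 \<union> encr ` B) \<times> (encl ` I1 \<union> encr ` B) = map_prod encr encr ` S" if "S \<subseteq> B \<times> B" for S
    using that by auto
  have e3: "(encl ` A \<times> encr ` B) \<inter> (encl ` I1 \<union> encr ` B) \<times> (encl ` I1 \<union> encr ` B) = encl ` I1 \<times> encr ` B"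
    using I1 by auto
  show ?thesis unfolding glue_unfold pp_restrict_def prod.case Int_Un_distrib2
    using e1 e2[OF sY(1)] e2[OF sY(2)] e3 by (cases b) simp_all
qed

lemma restrict_glue2: assumes X: "is_pp (A, H, R)" and Y: "is_pp (B, H', R')" and B': "B' \<subseteq> B"
  shows "pp_restrict (glue b (A, H, R) (B, H', R')) (encl ` A \<union> encr ` B') = glue b (A, H, R) (pp_restrict (B, H', R') B')"
proof -
  have sX: "H \<subseteq> A \<times> A" "R \<subseteq> A \<times> A" using is_pp_sub[OF X] by auto
  have e1: "map_prod encr encr ` S \<inter> (encl ` A \<union> encr ` B') \<times> (encl ` A \<union> encr ` B') = map_prod encr encr ` (S \<inter> B' \<times> B')" for S
    by auto
  have e2: "map_prod encl encl ` S \<inter> (encl ` A \<union> encr ` B') \<times> (encl ` A \<union> encr ` B') = map_prod encl encl ` S" if "S \<subseteq> A \<times> A" for S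
    using that by auto
  have e3: "(encl ` A \<times> encr ` B) \<inter> (encl ` A \<union> encr ` B') \<times> (encl ` A \<union> encr ` B') = encl ` A \<times> encr ` B'"
    using B' by auto
  show ?thesis unfolding glue_unfold pp_restrict_def prod.case Int_Un_distrib2
    using e1 e2[OF sX(1)] e2[OF sX(2)] e3 by (cases b) simp_all
qed

lemma card_map_prod_encl: "card (map_prod encl encl ` S) = card S" "card (map_prod encr encr ` S) = card S"
proof -
  have i1: "inj (map_prod encl encl)" and i2: "inj (map_prod encr encr)"
    using map_prod_inj_on[OF inj_encl inj_encl] map_prod_inj_on[OF inj_encr inj_encr] by simp_all
  show "card (map_prod encl encl ` S) = card S" by (rule card_image, rule inj_on_subset[OF i1]) simp
  show "card (map_prod encr encr ` S) = card S" by (rule card_image, rule inj_on_subset[OF i2]) simp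
qed

lemma hcount_glue1: assumes X: "is_pp (A, H, R)" and Y: "is_pp (B, H', R')" and I1: "I1 \<subseteq> A"
  shows "hcount (glue b (A, H, R) (B, H', R')) (encl ` (A - I1)) (encl ` I1 \<union> encr ` B) =
    hcount (A, H, R) (A - I1) I1 + (if b then card (A - I1) * card B else 0)"
proof -
  have fA: "finite A" and fB: "finite B" using is_pp_sub[OF X] is_pp_sub[OF Y] by auto
  let ?SX = "{(x, y). x \<in> A - I1 \<and> y \<in> I1 \<and> (x, y) \<in> H \<and> x \<noteq> y}"
  have finSX: "finite ?SX" by (rule finite_subset[of _ "A \<times> A"]) (use fA I1 in auto)
  let ?C = "if b then encl ` (A - I1) \<times> encr ` B else {}"
  have eq: "{(x, y). x \<in> encl ` (A - I1) \<and> y \<in> encl ` I1 \<union> encr ` B \<and>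
      (x, y) \<in> map_prod encl encl ` H \<union> map_prod encr encr ` H' \<union> (if b then encl ` A \<times> encr ` B else {}) \<and> x \<noteq> y}
    = map_prod encl encl ` ?SX \<union> ?C"
    by (cases b) auto
  have disj: "map_prod encl encl ` ?SX \<inter> ?C = {}" by (cases b) auto
  have finC: "finite ?C" using fA fB by simp
  have cC: "card ?C = (if b then card (A - I1) * card B else 0)"
    by (simp add: card_cartesian_product card_image inj_on_subset[OF inj_encl] inj_on_subset[OF inj_encr])
  show ?thesis unfolding glue_unfold hcount_alt eq
    by (subst card_Un_disjoint[OF finite_imageI[OF finSX] finC disj]) (simp add: card_map_prod_encl cC)
qed

lemma hcount_glue2: assumes X: "is_pp (A, H, R)" and Y: "is_pp (B, H', R')" and I2: "I2 \<subseteq> B"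
  shows "hcount (glue b (A, H, R) (B, H', R')) (encl ` A \<union> encr ` (B - I2)) (encr ` I2) =
    (if b then card A * card I2 else 0) + hcount (B, H', R') (B - I2) I2"
proof -
  have fA: "finite A" and fB: "finite B" using is_pp_sub[OF X] is_pp_sub[OF Y] by auto
  let ?SY = "{(x, y). x \<in> B - I2 \<and> y \<in> I2 \<and> (x, y) \<in> H' \<and> x \<noteq> y}"
  have finSY: "finite ?SY" by (rule finite_subset[of _ "B \<times> B"]) (use fB I2 in auto)
  let ?C = "if b then encl ` A \<times> encr ` I2 else {}"
  have eq: "{(x, y). x \<in> encl ` A \<union> encr ` (B - I2) \<and> y \<in> encr ` I2 \<and>
      (x, y) \<in> map_prod encl encl ` H \<union> map_prod encr encr ` H' \<union> (if b then encl ` A \<times> encr ` B else {}) \<and> x \<noteq> y}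
    = ?C \<union> map_prod encr encr ` ?SY"
    using I2 by (cases b) auto
  have disj: "?C \<inter> map_prod encr encr ` ?SY = {}" by (cases b) auto
  have finC: "finite ?C" using fA fB I2 finite_subset[OF I2 fB] by simp
  have cC: "card ?C = (if b then card A * card I2 else 0)"
    by (simp add: card_cartesian_product card_image inj_on_subset[OF inj_encl] inj_on_subset[OF inj_encr])
  show ?thesis unfolding glue_unfold hcount_alt eq
    by (subst card_Un_disjoint[OF finC finite_imageI[OF finSY] disj]) (simp add: card_map_prod_encl cC)
qed

lemma delta_glue:
  fixes q :: "'k::field"
  assumes X: "is_pp (A, H, R)" and Y: "is_pp (B, H', R')"
  shows "delta_raw q (glue b (A, H, R) (B, H', R')) =
    (\<Sum>I1\<in>{I1. biideal (A, H, R) I1}. Poly_Mapping.single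
        (pp_class (pp_restrict (A, H, R) (A - I1)), pp_class (glue b (pp_restrict (A, H, R) I1) (B, H', R')))
        (q ^ (if b then card (A - I1) * card B else 0) * q ^ hcount (A, H, R) (A - I1) I1))
  + (\<Sum>I2\<in>{I2. biideal (B, H', R') I2}. Poly_Mapping.single
        (pp_class (glue b (A, H, R) (pp_restrict (B, H', R') (B - I2))), pp_class (pp_restrict (B, H', R') I2))
        (q ^ (if b then card A * card I2 else 0) * q ^ hcount (B, H', R') (B - I2) I2))
  - Poly_Mapping.single (pp_class (A, H, R), pp_class (B, H', R')) (q ^ (if b then card A * card B else 0))"
proof -
  let ?G = "glue b (A, H, R) (B, H', R')"
  have fG: "fst ?G = encl ` A \<union> encr ` B" by (simp add: glue_unfold)
  have t1: "Poly_Mapping.single (pp_class (pp_restrict ?G (fst ?G - (encl ` I1 \<union> encr ` B))), pp_class (pp_restrict ?G (encl ` I1 \<union> encr ` B)))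
       (q ^ hcount ?G (fst ?G - (encl ` I1 \<union> encr ` B)) (encl ` I1 \<union> encr ` B)) =
     Poly_Mapping.single
        (pp_class (pp_restrict (A, H, R) (A - I1)), pp_class (glue b (pp_restrict (A, H, R) I1) (B, H', R')))
        (q ^ (if b then card (A - I1) * card B else 0) * q ^ hcount (A, H, R) (A - I1) I1)"
    if "I1 \<in> {I1. biideal (A, H, R) I1}" for I1
  proof -
    have I1: "I1 \<subseteq> A" using that biideal_sub by fastforce
    have d: "fst ?G - (encl ` I1 \<union> encr ` B) = encl ` (A - I1)" unfolding fG using I1 by auto
    show ?thesis unfolding d cls_restrict_encl[OF Diff_subset] restrict_glue1[OF X Y I1] hcount_glue1[OF X Y I1]
      by (simp add: power_add mult.commute)
  qed
  have t2: "Poly_Mapping.single (pp_class (pp_restrict ?G (fst ?G - encr ` I2)), pp_class (pp_restrict ?G (encr ` I2)))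
       (q ^ hcount ?G (fst ?G - encr ` I2) (encr ` I2)) =
     Poly_Mapping.single
        (pp_class (glue b (A, H, R) (pp_restrict (B, H', R') (B - I2))), pp_class (pp_restrict (B, H', R') I2))
        (q ^ (if b then card A * card I2 else 0) * q ^ hcount (B, H', R') (B - I2) I2)"
    if "I2 \<subseteq> B" for I2
  proof -
    have d: "fst ?G - encr ` I2 = encl ` A \<union> encr ` (B - I2)" unfolding fG using that by auto
    show ?thesis unfolding d cls_restrict_encr[OF that] restrict_glue2[OF X Y Diff_subset] hcount_glue2[OF X Y that]
      by (simp add: power_add)
  qed
  have t3: "Poly_Mapping.single (pp_class (pp_restrict ?G (fst ?G - encr ` B)), pp_class (pp_restrict ?G (encr ` B)))
       (q ^ hcount ?G (fst ?G - encr ` B) (encr ` B)) =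
     Poly_Mapping.single (pp_class (A, H, R), pp_class (B, H', R')) (q ^ (if b then card A * card B else 0))"
  proof -
    have d: "fst ?G - encr ` B = encl ` A" unfolding fG by auto
    have h: "hcount ?G (encl ` A) (encr ` B) = (if b then card A * card B else 0)"
      using hcount_glue2[OF X Y order_refl, of b] by (simp add: hcount_alt)
    show ?thesis unfolding d h cls_restrict_encl[OF order_refl] cls_restrict_encr[OF order_refl]
      restrict_full[OF X] restrict_full[OF Y] ..
  qed
  show ?thesis unfolding delta_raw_def sum_glue_biideals[OF X Y] t3
  proof (intro arg_cong2[where f = "(-)"] arg_cong2[where f = "(+)"] sum.cong refl t1)
    fix x assume "x \<in> {I2. biideal (B, H', R') I2}"
    hence "x \<subseteq> B" using biideal_sub by fastforce
    thus "Poly_Mapping.single (pp_class (pp_restrict ?G (fst ?G - encr ` x)), pp_class (pp_restrict ?G (encr ` x)))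
       (q ^ hcount ?G (fst ?G - encr ` x) (encr ` x)) =
     Poly_Mapping.single
        (pp_class (glue b (A, H, R) (pp_restrict (B, H', R') (B - x))), pp_class (pp_restrict (B, H', R') x))
        (q ^ (if b then card A * card x else 0) * q ^ hcount (B, H', R') (B - x) x)" by (rule t2)
  qed
qed

lemma trm_sum: assumes "finite S"
  shows "tens_rmul c mul (\<Sum>i\<in>S. Poly_Mapping.single (k i) (w i)) y =
    (\<Sum>i\<in>S. Poly_Mapping.single (fst (k i), mul (snd (k i)) y) (c (fst (k i)) (snd (k i)) * (w i :: 'k::field)))"
  unfolding tens_rmul_def
  by (rule pm_lin[OF _ assms, where F = "\<lambda>p w. Poly_Mapping.single (fst p, mul (snd p) y) (c (fst p) (snd p) * w)"])
     (simp add: distrib_left single_add)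

lemma tlm_sum: assumes "finite S"
  shows "tens_lmul c mul x (\<Sum>i\<in>S. Poly_Mapping.single (k i) (w i)) =
    (\<Sum>i\<in>S. Poly_Mapping.single (mul x (fst (k i)), snd (k i)) (c (fst (k i)) (snd (k i)) * (w i :: 'k::field)))"
  unfolding tens_lmul_def
  by (rule pm_lin[OF _ assms, where F = "\<lambda>p w. Poly_Mapping.single (mul x (fst p), snd p) (c (fst p) (snd p) * w)"])
     (simp add: distrib_left single_add)

lemma delta_rep_expand: "delta q x = (\<Sum>I\<in>{I. biideal (pp_rep x) I}.
      Poly_Mapping.single (pp_class (pp_restrict (pp_rep x) (fst (pp_rep x) - I)), pp_class (pp_restrict (pp_rep x) I))
        (q ^ hcount (pp_rep x) (fst (pp_rep x) - I) I))"
  unfolding delta_def delta_raw_def ..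

lemma m_formula:
  fixes q :: "'k::field"
  assumes x: "x \<in> PP" and y: "y \<in> PP"
  shows "delta q (pp_m x y) =
              tens_rmul (\<lambda>_ _. 1) pp_m (delta q x) y
              + tens_lmul (\<lambda>_ _. 1) pp_m x (delta q y)
              - Poly_Mapping.single (x, y) 1"
proof -
  obtain A H R where X: "pp_rep x = (A, H, R)" by (cases "pp_rep x")
  obtain B H' R' where Y: "pp_rep y = (B, H', R')" by (cases "pp_rep y")
  have ppX: "is_pp (A, H, R)" and cx: "pp_class (A, H, R) = x" using PP_rep[OF x] X by simp_all
  have ppY: "is_pp (B, H', R')" and cy: "pp_class (B, H', R') = y" using PP_rep[OF y] Y by simp_all
  have lhs: "delta q (pp_m x y) = delta_raw q (glue False (A, H, R) (B, H', R'))"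
    unfolding pp_m_def pp_m_glue X Y by (rule delta_class[OF is_pp_glue[OF ppX ppY]])
  have r1: "tens_rmul (\<lambda>_ _. 1) pp_m (delta q x) y =
    (\<Sum>I1\<in>{I1. biideal (A, H, R) I1}. Poly_Mapping.single
        (pp_class (pp_restrict (A, H, R) (A - I1)), pp_class (glue False (pp_restrict (A, H, R) I1) (B, H', R')))
        (q ^ (if False then card (A - I1) * card B else 0) * q ^ hcount (A, H, R) (A - I1) I1))"
    unfolding delta_rep_expand[of q x] X trm_sum[OF finite_biideals[OF ppX]]
  proof (rule sum.cong[OF refl])
    fix I1 assume "I1 \<in> {I1. biideal (A, H, R) I1}"
    hence "I1 \<subseteq> A" using biideal_sub by fastforce
    hence pp1: "is_pp (pp_restrict (A, H, R) I1)" using is_pp_restrict[OF ppX] by simp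
    show "Poly_Mapping.single (fst (pp_class (pp_restrict (A, H, R) (fst (A, H, R) - I1)), pp_class (pp_restrict (A, H, R) I1)),
          pp_m (snd (pp_class (pp_restrict (A, H, R) (fst (A, H, R) - I1)), pp_class (pp_restrict (A, H, R) I1))) y)
         (1 * q ^ hcount (A, H, R) (fst (A, H, R) - I1) I1) =
      Poly_Mapping.single (pp_class (pp_restrict (A, H, R) (A - I1)), pp_class (glue False (pp_restrict (A, H, R) I1) (B, H', R')))
         (q ^ (if False then card (A - I1) * card B else 0) * q ^ hcount (A, H, R) (A - I1) I1)"
      using pp_m_class[OF pp1 ppY] cy by simp
  qed
  have r2: "tens_lmul (\<lambda>_ _. 1) pp_m x (delta q y) =
    (\<Sum>I2\<in>{I2. biideal (B, H', R') I2}. Poly_Mapping.single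
        (pp_class (glue False (A, H, R) (pp_restrict (B, H', R') (B - I2))), pp_class (pp_restrict (B, H', R') I2))
        (q ^ (if False then card A * card I2 else 0) * q ^ hcount (B, H', R') (B - I2) I2))"
    unfolding delta_rep_expand[of q y] Y tlm_sum[OF finite_biideals[OF ppY]]
  proof (rule sum.cong[OF refl])
    fix I2 assume "I2 \<in> {I2. biideal (B, H', R') I2}"
    have pp2: "is_pp (pp_restrict (B, H', R') (B - I2))" using is_pp_restrict[OF ppY] by simp
    show "Poly_Mapping.single (pp_m x (fst (pp_class (pp_restrict (B, H', R') (fst (B, H', R') - I2)), pp_class (pp_restrict (B, H', R') I2))),
          snd (pp_class (pp_restrict (B, H', R') (fst (B, H', R') - I2)), pp_class (pp_restrict (B, H', R') I2)))
         (1 * q ^ hcount (B, H', R') (fst (B, H', R') - I2) I2) =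
      Poly_Mapping.single (pp_class (glue False (A, H, R) (pp_restrict (B, H', R') (B - I2))), pp_class (pp_restrict (B, H', R') I2))
         (q ^ (if False then card A * card I2 else 0) * q ^ hcount (B, H', R') (B - I2) I2)"
      using pp_m_class[OF ppX pp2] cx by simp
  qed
  show ?thesis unfolding lhs r1 r2 delta_glue[OF ppX ppY] cx cy by simp
qed

lemma tri_formula:
  fixes q :: "'k::field"
  assumes x: "x \<in> PP" and y: "y \<in> PP"
  shows "delta q (pp_tri x y) =
              tens_rmul (\<lambda>a b. q ^ (pp_card a * pp_card y)) pp_tri (delta q x) y
              + tens_lmul (\<lambda>a b. q ^ (pp_card x * pp_card b)) pp_tri x (delta q y)
              - Poly_Mapping.single (x, y) (q ^ (pp_card x * pp_card y))"
proof -
  obtain A H R where X: "pp_rep x = (A, H, R)" by (cases "pp_rep x")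
  obtain B H' R' where Y: "pp_rep y = (B, H', R')" by (cases "pp_rep y")
  have ppX: "is_pp (A, H, R)" and cx: "pp_class (A, H, R) = x" using PP_rep[OF x] X by simp_all
  have ppY: "is_pp (B, H', R')" and cy: "pp_class (B, H', R') = y" using PP_rep[OF y] Y by simp_all
  have cardx: "pp_card x = card A" and cardy: "pp_card y = card B" unfolding pp_card_def X Y by simp_all
  have lhs: "delta q (pp_tri x y) = delta_raw q (glue True (A, H, R) (B, H', R'))"
    unfolding pp_tri_def pp_tri_glue X Y by (rule delta_class[OF is_pp_glue[OF ppX ppY]])
  have r1: "tens_rmul (\<lambda>a b. q ^ (pp_card a * pp_card y)) pp_tri (delta q x) y =
    (\<Sum>I1\<in>{I1. biideal (A, H, R) I1}. Poly_Mapping.single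
        (pp_class (pp_restrict (A, H, R) (A - I1)), pp_class (glue True (pp_restrict (A, H, R) I1) (B, H', R')))
        (q ^ (if True then card (A - I1) * card B else 0) * q ^ hcount (A, H, R) (A - I1) I1))"
    unfolding delta_rep_expand[of q x] X trm_sum[OF finite_biideals[OF ppX]]
  proof (rule sum.cong[OF refl])
    fix I1 assume "I1 \<in> {I1. biideal (A, H, R) I1}"
    hence "I1 \<subseteq> A" using biideal_sub by fastforce
    hence pp1: "is_pp (pp_restrict (A, H, R) I1)" using is_pp_restrict[OF ppX] by simp
    have pp1': "is_pp (pp_restrict (A, H, R) (A - I1))" using is_pp_restrict[OF ppX] by simp
    show "Poly_Mapping.single (fst (pp_class (pp_restrict (A, H, R) (fst (A, H, R) - I1)), pp_class (pp_restrict (A, H, R) I1)),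
          pp_tri (snd (pp_class (pp_restrict (A, H, R) (fst (A, H, R) - I1)), pp_class (pp_restrict (A, H, R) I1))) y)
         ((\<lambda>a b. q ^ (pp_card a * pp_card y)) (fst (pp_class (pp_restrict (A, H, R) (fst (A, H, R) - I1)), pp_class (pp_restrict (A, H, R) I1)))
            (snd (pp_class (pp_restrict (A, H, R) (fst (A, H, R) - I1)), pp_class (pp_restrict (A, H, R) I1)))
          * q ^ hcount (A, H, R) (fst (A, H, R) - I1) I1) =
      Poly_Mapping.single (pp_class (pp_restrict (A, H, R) (A - I1)), pp_class (glue True (pp_restrict (A, H, R) I1) (B, H', R')))
         (q ^ (if True then card (A - I1) * card B else 0) * q ^ hcount (A, H, R) (A - I1) I1)"
      using pp_tri_class[OF pp1 ppY] cy pp_card_class[OF pp1'] cardy by simp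
  qed
  have r2: "tens_lmul (\<lambda>a b. q ^ (pp_card x * pp_card b)) pp_tri x (delta q y) =
    (\<Sum>I2\<in>{I2. biideal (B, H', R') I2}. Poly_Mapping.single
        (pp_class (glue True (A, H, R) (pp_restrict (B, H', R') (B - I2))), pp_class (pp_restrict (B, H', R') I2))
        (q ^ (if True then card A * card I2 else 0) * q ^ hcount (B, H', R') (B - I2) I2))"
    unfolding delta_rep_expand[of q y] Y tlm_sum[OF finite_biideals[OF ppY]]
  proof (rule sum.cong[OF refl])
    fix I2 assume "I2 \<in> {I2. biideal (B, H', R') I2}"
    hence "I2 \<subseteq> B" using biideal_sub by fastforce
    hence pp2': "is_pp (pp_restrict (B, H', R') I2)" using is_pp_restrict[OF ppY] by simp
    have pp2: "is_pp (pp_restrict (B, H', R') (B - I2))" using is_pp_restrict[OF ppY] by simp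
    show "Poly_Mapping.single (pp_tri x (fst (pp_class (pp_restrict (B, H', R') (fst (B, H', R') - I2)), pp_class (pp_restrict (B, H', R') I2))),
          snd (pp_class (pp_restrict (B, H', R') (fst (B, H', R') - I2)), pp_class (pp_restrict (B, H', R') I2)))
         ((\<lambda>a b. q ^ (pp_card x * pp_card b)) (fst (pp_class (pp_restrict (B, H', R') (fst (B, H', R') - I2)), pp_class (pp_restrict (B, H', R') I2)))
            (snd (pp_class (pp_restrict (B, H', R') (fst (B, H', R') - I2)), pp_class (pp_restrict (B, H', R') I2)))
          * q ^ hcount (B, H', R') (fst (B, H', R') - I2) I2) =
      Poly_Mapping.single (pp_class (glue True (A, H, R) (pp_restrict (B, H', R') (B - I2))), pp_class (pp_restrict (B, H', R') I2))
         (q ^ (if True then card A * card I2 else 0) * q ^ hcount (B, H', R') (B - I2) I2)"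
      using pp_tri_class[OF ppX pp2] cx pp_card_class[OF pp2'] cardx by simp
  qed
  show ?thesis unfolding lhs r1 r2 unfolding delta_glue[OF ppX ppY] cx cy cardx cardy by simp
qed

theorem theorem7:
  fixes q :: "'k::field"
  shows "(\<forall>v :: ppc \<Rightarrow>\<^sub>0 'k. Poly_Mapping.keys v \<subseteq> PP \<longrightarrow>
            delta_tensor_id (delta q) (delta_lin q v) = id_tensor_delta (delta q) (delta_lin q v))
       \<and> (\<forall>x \<in> PP. \<forall>y \<in> PP.
            delta q (pp_m x y) =
              tens_rmul (\<lambda>_ _. 1) pp_m (delta q x) y
              + tens_lmul (\<lambda>_ _. 1) pp_m x (delta q y)
              - Poly_Mapping.single (x, y) 1)
       \<and> (\<forall>x \<in> PP. \<forall>y \<in> PP.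
            delta q (pp_tri x y) =
              tens_rmul (\<lambda>a b. q ^ (pp_card a * pp_card y)) pp_tri (delta q x) y
              + tens_lmul (\<lambda>a b. q ^ (pp_card x * pp_card b)) pp_tri x (delta q y)
              - Poly_Mapping.single (x, y) (q ^ (pp_card x * pp_card y)))"
  using coassoc m_formula tri_formula by blast

end
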